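(* Let $x_0\in(0,1)$ and let $a,b,\lambda$ satisfy condition (H) and, with Dirichlet boundary conditions, $\lambda\neq0$ and $\lambda<1/C^*$. Then there exists $\Lambda>0$ such that for all $u\in\mathcal K$, \[\int_0^1(u'(x))^2dx-\lambda\int_0^1\frac{u^2(x)}{a(x)b(x)}dx\ge\Lambda\|u\|^2_{\mathcal K}.\]
   Context: $a,b:[0,1]\to\mathbb R$ with $a(x_0)=b(x_0)=0$, $a,b>0$ on $[0,1]\setminus\{x_0\}$. Degeneracy types: (WWD) $a,b\in W^{1,1}(0,1)$, $K_1,K_2\in(0,1)$ with $(x-x_0)a'\le K_1a$, $(x-x_0)b'\le K_2b$ a.e.; (SSD) $a,b\in W^{1,\infty}$, same with $K_1,K_2\in[1,2)$; (WSD) $a\in W^{1,1}$, $b\in W^{1,\infty}$, $K_1\in(0,1)$, $K_2\in[1,2)$; (SWD) $a\in W^{1,\infty}$, $b\in W^{1,1}$, $K_1\in[1,2)$, $K_2\in(0,1)$. Condition (H): one of (H1) (WWD) with $K_1+K_2<1$; (H2) (WWD) with $1\le K_1+K_2\le2$ and $c_1,c_2>0$ with $|x-x_0|^{K_1}\ge c_1a$, $|x-x_0|^{K_2}\ge c_2b$ on $[0,1]$; (H3) (WSD) or (SWD) with $K_1+K_2\le2$ and such $c_1,c_2$; (H4) (SSD) with $K_1=K_2=1$. $L^2_{\frac1a}(0,1)=\{u\in L^2:\int u^2/a<\infty\}$; $\mathcal K_a=L^2_{\frac1a}(0,1)\cap H^1_0(0,1)$ with $\|u\|^2=\int u^2/a+\int(u')^2$;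 $\mathcal K_{a,b}=\{u\in\mathcal K_a:u/\sqrt{ab}\in L^2\}$ with $\|u\|^2=\int u^2/a+\int(u')^2+\int u^2/(ab)$. $\mathcal K=\mathcal K_a$ under (H1) and $\mathcal K=\mathcal K_{a,b}$ under (H2)–(H4). $C^*$ is the best constant $C$ in $\int_0^1u^2/(ab)\le C\int_0^1(u')^2$ for $u\in\mathcal K$. *)

theory Defs
  imports "HOL-Analysis.Analysis"
begin

definition I01 :: "(real \<Rightarrow> real) \<Rightarrow> real" where
  "I01 f = set_lebesgue_integral lborel {0..1} f"

(* f \<in> W^{1,1}(0,1) with (weak) derivative g: g \<in> L^1(0,1) and f is the primitive of g on [0,1] *)
definition W11_deriv :: "(real \<Rightarrow> real) \<Rightarrow> (real \<Rightarrow> real) \<Rightarrow> bool" where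
  "W11_deriv f g \<longleftrightarrow> set_integrable lborel {0..1} g \<and>
     (\<forall>x\<in>{0..1}. f x = f 0 + set_lebesgue_integral lborel {0..x} g)"

definition W1inf_deriv :: "(real \<Rightarrow> real) \<Rightarrow> (real \<Rightarrow> real) \<Rightarrow> bool" where
  "W1inf_deriv f g \<longleftrightarrow> W11_deriv f g \<and>
     (\<exists>M. AE x in lborel. x \<in> {0..1} \<longrightarrow> \<bar>g x\<bar> \<le> M)"

definition weak_deg :: "real \<Rightarrow> (real \<Rightarrow> real) \<Rightarrow> real \<Rightarrow> bool" where
  "weak_deg x0 f K \<longleftrightarrow> 0 < K \<and> K < 1 \<and>
     (\<exists>g. W11_deriv f g \<and> (AE x in lborel. x \<in> {0..1} \<longrightarrow> (x - x0) * g x \<le> K * f x))"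

definition strong_deg :: "real \<Rightarrow> (real \<Rightarrow> real) \<Rightarrow> real \<Rightarrow> bool" where
  "strong_deg x0 f K \<longleftrightarrow> 1 \<le> K \<and> K < 2 \<and>
     (\<exists>g. W1inf_deriv f g \<and> (AE x in lborel. x \<in> {0..1} \<longrightarrow> (x - x0) * g x \<le> K * f x))"

definition basic_ab :: "real \<Rightarrow> (real \<Rightarrow> real) \<Rightarrow> (real \<Rightarrow> real) \<Rightarrow> bool" where
  "basic_ab x0 a b \<longleftrightarrow> a x0 = 0 \<and> b x0 = 0 \<and>
     (\<forall>x\<in>{0..1} - {x0}. 0 < a x \<and> 0 < b x)"

definition growth :: "real \<Rightarrow> (real \<Rightarrow> real) \<Rightarrow> (real \<Rightarrow> real) \<Rightarrow> real \<Rightarrow> real \<Rightarrow> bool" where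
  "growth x0 a b K1 K2 \<longleftrightarrow> (\<exists>c1>0. \<exists>c2>0. \<forall>x\<in>{0..1}.
     \<bar>x - x0\<bar> powr K1 \<ge> c1 * a x \<and> \<bar>x - x0\<bar> powr K2 \<ge> c2 * b x)"

definition H1 :: "real \<Rightarrow> (real \<Rightarrow> real) \<Rightarrow> (real \<Rightarrow> real) \<Rightarrow> real \<Rightarrow> real \<Rightarrow> bool" where
  "H1 x0 a b K1 K2 \<longleftrightarrow> weak_deg x0 a K1 \<and> weak_deg x0 b K2 \<and> K1 + K2 < 1"

definition H2 :: "real \<Rightarrow> (real \<Rightarrow> real) \<Rightarrow> (real \<Rightarrow> real) \<Rightarrow> real \<Rightarrow> real \<Rightarrow> bool" where
  "H2 x0 a b K1 K2 \<longleftrightarrow> weak_deg x0 a K1 \<and> weak_deg x0 b K2 \<and> 1 \<le> K1 + K2 \<and> K1 + K2 \<le> 2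
     \<and> growth x0 a b K1 K2"

definition H3 :: "real \<Rightarrow> (real \<Rightarrow> real) \<Rightarrow> (real \<Rightarrow> real) \<Rightarrow> real \<Rightarrow> real \<Rightarrow> bool" where
  "H3 x0 a b K1 K2 \<longleftrightarrow>
     ((weak_deg x0 a K1 \<and> strong_deg x0 b K2) \<or> (strong_deg x0 a K1 \<and> weak_deg x0 b K2))
     \<and> K1 + K2 \<le> 2 \<and> growth x0 a b K1 K2"

definition H4 :: "real \<Rightarrow> (real \<Rightarrow> real) \<Rightarrow> (real \<Rightarrow> real) \<Rightarrow> real \<Rightarrow> real \<Rightarrow> bool" where
  "H4 x0 a b K1 K2 \<longleftrightarrow> strong_deg x0 a K1 \<and> strong_deg x0 b K2 \<and> K1 = 1 \<and> K2 = 1"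

definition condH :: "real \<Rightarrow> (real \<Rightarrow> real) \<Rightarrow> (real \<Rightarrow> real) \<Rightarrow> real \<Rightarrow> real \<Rightarrow> bool" where
  "condH x0 a b K1 K2 \<longleftrightarrow> H1 x0 a b K1 K2 \<or> H2 x0 a b K1 K2 \<or> H3 x0 a b K1 K2 \<or> H4 x0 a b K1 K2"

(* u \<in> H^1_0(0,1) with derivative u' (u the absolutely continuous representative) *)
definition H10 :: "(real \<Rightarrow> real) \<Rightarrow> (real \<Rightarrow> real) \<Rightarrow> bool" where
  "H10 u u' \<longleftrightarrow> set_borel_measurable lborel {0..1} u' \<and>
     set_integrable lborel {0..1} (\<lambda>x. (u' x)\<^sup>2) \<and>
     (\<forall>x\<in>{0..1}. u x = set_lebesgue_integral lborel {0..x} u') \<and> u 0 = 0 \<and> u 1 = 0"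

definition Ka_mem :: "(real \<Rightarrow> real) \<Rightarrow> (real \<Rightarrow> real) \<Rightarrow> (real \<Rightarrow> real) \<Rightarrow> bool" where
  "Ka_mem a u u' \<longleftrightarrow> H10 u u' \<and> set_integrable lborel {0..1} (\<lambda>x. (u x)\<^sup>2 / a x)"

definition Kab_mem :: "(real \<Rightarrow> real) \<Rightarrow> (real \<Rightarrow> real) \<Rightarrow> (real \<Rightarrow> real) \<Rightarrow> (real \<Rightarrow> real) \<Rightarrow> bool" where
  "Kab_mem a b u u' \<longleftrightarrow> Ka_mem a u u' \<and>
     set_integrable lborel {0..1} (\<lambda>x. (u x)\<^sup>2 / (a x * b x))"

definition K_mem :: "real \<Rightarrow> (real \<Rightarrow> real) \<Rightarrow> (real \<Rightarrow> real) \<Rightarrow> real \<Rightarrow> real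
    \<Rightarrow> (real \<Rightarrow> real) \<Rightarrow> (real \<Rightarrow> real) \<Rightarrow> bool" where
  "K_mem x0 a b K1 K2 u u' \<longleftrightarrow>
     (if H1 x0 a b K1 K2 then Ka_mem a u u' else Kab_mem a b u u')"

definition K_normsq :: "real \<Rightarrow> (real \<Rightarrow> real) \<Rightarrow> (real \<Rightarrow> real) \<Rightarrow> real \<Rightarrow> real
    \<Rightarrow> (real \<Rightarrow> real) \<Rightarrow> (real \<Rightarrow> real) \<Rightarrow> real" where
  "K_normsq x0 a b K1 K2 u u' =
     (if H1 x0 a b K1 K2
      then I01 (\<lambda>x. (u x)\<^sup>2 / a x) + I01 (\<lambda>x. (u' x)\<^sup>2)
      else I01 (\<lambda>x. (u x)\<^sup>2 / a x) + I01 (\<lambda>x. (u' x)\<^sup>2) + I01 (\<lambda>x. (u x)\<^sup>2 / (a x * b x)))"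

definition C_star :: "real \<Rightarrow> (real \<Rightarrow> real) \<Rightarrow> (real \<Rightarrow> real) \<Rightarrow> real \<Rightarrow> real \<Rightarrow> real" where
  "C_star x0 a b K1 K2 = Inf {C. \<forall>u u'. K_mem x0 a b K1 K2 u u' \<longrightarrow>
      I01 (\<lambda>x. (u x)\<^sup>2 / (a x * b x)) \<le> C * I01 (\<lambda>x. (u' x)\<^sup>2)}"

end

theory Submission
  imports Defs
begin


lemma set_nn_eq:
  fixes f :: "real \<Rightarrow> real"
  assumes "set_integrable lborel S f" "\<And>x. x \<in> S \<Longrightarrow> 0 \<le> f x"
  shows "(\<integral>\<^sup>+x. indicator S x * ennreal (f x) \<partial>lborel) = ennreal (LINT x:S|lborel. f x)"
proof -
  have i: "integrable lborel (\<lambda>x. indicator S x * f x)" using assms(1) unfolding set_integrable_def by simp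
  have "(\<integral>\<^sup>+x. ennreal (indicator S x * f x) \<partial>lborel) = ennreal (integral\<^sup>L lborel (\<lambda>x. indicator S x * f x))"
    by (rule nn_integral_eq_integral[OF i]) (use assms(2) in \<open>auto simp: indicator_def\<close>)
  moreover have "\<And>x. ennreal (indicator S x * f x) = indicator S x * ennreal (f x)"
    by (auto simp: indicator_def)
  ultimately show ?thesis unfolding set_lebesgue_integral_def by simp
qed

lemma set_integral_le_nn:
  fixes f :: "real \<Rightarrow> real"
  assumes "\<And>x. x \<in> S \<Longrightarrow> 0 \<le> f x" "0 \<le> c"
    "(\<integral>\<^sup>+x. indicator S x * ennreal (f x) \<partial>lborel) \<le> ennreal c"
  shows "(LINT x:S|lborel. f x) \<le> c"
proof cases
  assume si: "set_integrable lborel S f"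
  have "ennreal (LINT x:S|lborel. f x) \<le> ennreal c" using set_nn_eq[OF si assms(1)] assms(3) by simp
  then show ?thesis using assms(2) by (simp add: ennreal_le_iff)
next
  assume "\<not> set_integrable lborel S f"
  then have "(LINT x:S|lborel. f x) = 0"
    unfolding set_integrable_def set_lebesgue_integral_def by (simp add: not_integrable_integral_eq)
  then show ?thesis using assms(2) by simp
qed

lemma amgm_sq:
  fixes X p q :: real
  assumes "0 \<le> X" "0 \<le> p" "0 \<le> q" "\<And>l. l > 0 \<Longrightarrow> X \<le> (l * p + q / l) / 2"
  shows "X\<^sup>2 \<le> p * q"
proof (cases "p > 0 \<and> q > 0")
  case True
  define l where "l = sqrt q / sqrt p"
  have l: "l > 0" using True by (simp add: l_def)
  have "X \<le> (l * p + q / l) / 2" using assms(4)[OF l] .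
  also have "l * p = sqrt (p*q)" using True by (simp add: l_def real_sqrt_mult field_simps)
  also have "q / l = sqrt (p*q)" using True by (simp add: l_def real_sqrt_mult field_simps)
  finally have "X \<le> sqrt (p*q)" by simp
  then have "X\<^sup>2 \<le> (sqrt (p*q))\<^sup>2" using assms(1) by (intro power_mono) auto
  then show ?thesis using True by simp
next
  case False
  have "X = 0"
  proof (rule ccontr)
    assume "X \<noteq> 0" then have X: "X > 0" using assms(1) by simp
    show False
    proof (cases "p = 0")
      case True
      have "X \<le> (((q+1)/X) * p + q / ((q+1)/X)) / 2" using assms(4)[of "(q+1)/X"] X assms(3) by simp
      also have "\<dots> = q * X / (2*(q+1))" using True X assms(3) by (simp add: field_simps)
      also have "\<dots> < X" using X assms(3) by (simp add: field_simps) (smt (verit) mult_nonneg_nonneg)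
      finally show False by simp
    next
      case False
      then have q: "q = 0" using \<open>\<not> (p > 0 \<and> q > 0)\<close> assms by auto
      have "X \<le> ((X/(p+1)) * p + q / (X/(p+1))) / 2" using assms(4)[of "X/(p+1)"] X assms(2) by simp
      also have "\<dots> = X * p / (2*(p+1))" using q X assms(2) by (simp add: field_simps)
      also have "\<dots> < X" using X assms(2) by (simp add: field_simps) (smt (verit) mult_nonneg_nonneg)
      finally show False by simp
    qed
  qed
  then show ?thesis using assms by simp
qed

lemma nn_powr_0L:
  fixes L p :: real
  assumes "p > -1" "L \<ge> 0"
  shows "(\<integral>\<^sup>+y. indicator {0..L} y * ennreal (y powr p) \<partial>lborel) = ennreal (L powr (p+1) / (p+1))"
proof -
  have "((\<lambda>y. y powr p) has_integral (L powr (p+1) / (p+1))) {0..L}"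
    by (rule has_integral_powr_from_0) (use assms in auto)
  then have h: "((\<lambda>y. indicator {0..L} y * y powr p) has_integral (L powr (p+1) / (p+1))) UNIV"
  proof -
    have e: "(\<lambda>y. indicator {0..L} y * y powr p) = (\<lambda>y. if y \<in> {0..L} then y powr p else 0)"
      by (auto simp: indicator_def)
    show ?thesis unfolding e has_integral_restrict_UNIV by fact
  qed
  have "(\<integral>\<^sup>+y. ennreal (indicator {0..L} y * y powr p) \<partial>lborel) = ennreal (L powr (p+1) / (p+1))"
    by (rule nn_integral_has_integral_lborel[OF _ _ h]) auto
  moreover have "\<And>y. ennreal (indicator {0..L} y * y powr p) = indicator {0..L} y * ennreal (y powr p)"
    by (auto simp: indicator_def)
  ultimately show ?thesis by simp
qed



lemma nn_powr_shift:
  fixes x0 x p :: real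
  assumes "p > -1" "x0 \<le> x"
  shows "(\<integral>\<^sup>+y. indicator {x0..x} y * ennreal ((y-x0) powr p) \<partial>lborel) = ennreal ((x-x0) powr (p+1) / (p+1))"
proof -
  have "(\<integral>\<^sup>+y. indicator {x0..x} y * ennreal ((y-x0) powr p) \<partial>lborel)
     = (\<integral>\<^sup>+y. indicator {x0..x} (x0 + 1*y) * ennreal ((x0 + 1*y - x0) powr p) \<partial>lborel)"
    by (subst nn_integral_real_affine[where c=1 and t=x0]) auto
  also have "\<dots> = (\<integral>\<^sup>+y. indicator {0..x-x0} y * ennreal (y powr p) \<partial>lborel)"
    by (intro nn_integral_cong) (auto simp: indicator_def)
  also have "\<dots> = ennreal ((x-x0) powr (p+1) / (p+1))"
    by (rule nn_powr_0L) (use assms in auto)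
  finally show ?thesis .
qed

lemma nn_powr_interval:
  fixes x0 y e :: real
  assumes "x0 < y" "y \<le> e"
  shows "(\<integral>\<^sup>+x. indicator {y..e} x * ennreal ((x-x0) powr (-3/2)) \<partial>lborel)
    = ennreal (2*(y-x0) powr (-1/2) - 2*(e-x0) powr (-1/2))"
proof -
  have d: "((\<lambda>x. -2 * (x-x0) powr (-1/2)) has_vector_derivative (x-x0) powr (-3/2)) (at x within {y..e})"
    if "x \<in> {y..e}" for x
  proof -
    have xp: "x - x0 > 0" using that assms by auto
    have "((\<lambda>x. -2 * (x-x0) powr (-1/2)) has_real_derivative (-2 * ((-1/2) * (x-x0) powr (-1/2 - 1) * 1))) (at x)"
      by (intro derivative_eq_intros DERIV_powr) (use xp in auto)
    moreover have "-2 * ((-1/2) * (x-x0) powr (-1/2 - 1) * 1) = (x-x0) powr (-3/2)" by simp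
    ultimately show ?thesis
      by (simp add: has_real_derivative_iff_has_vector_derivative[symmetric] has_field_derivative_at_within)
  qed
  have "((\<lambda>x. (x-x0) powr (-3/2)) has_integral (-2 * (e-x0) powr (-1/2) - -2 * (y-x0) powr (-1/2))) {y..e}"
    by (rule fundamental_theorem_of_calculus[OF assms(2)]) (use d in auto)
  then have h: "((\<lambda>x. indicator {y..e} x * (x-x0) powr (-3/2)) has_integral (2*(y-x0) powr (-1/2) - 2*(e-x0) powr (-1/2))) UNIV"
  proof -
    assume a: "((\<lambda>x. (x-x0) powr (-3/2)) has_integral (-2 * (e-x0) powr (-1/2) - -2 * (y-x0) powr (-1/2))) {y..e}"
    have e: "(\<lambda>x. indicator {y..e} x * (x-x0) powr (-3/2)) = (\<lambda>x. if x \<in> {y..e} then (x-x0) powr (-3/2) else 0)"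
      by (auto simp: indicator_def)
    show ?thesis unfolding e has_integral_restrict_UNIV using a by simp
  qed
  have "(\<integral>\<^sup>+x. ennreal (indicator {y..e} x * (x-x0) powr (-3/2)) \<partial>lborel) = ennreal (2*(y-x0) powr (-1/2) - 2*(e-x0) powr (-1/2))"
    by (rule nn_integral_has_integral_lborel[OF _ _ h]) auto
  moreover have "\<And>x. ennreal (indicator {y..e} x * (x-x0) powr (-3/2)) = indicator {y..e} x * ennreal ((x-x0) powr (-3/2))"
    by (auto simp: indicator_def)
  ultimately show ?thesis by simp
qed

lemma amgm_pt:
  fixes v z :: real
  assumes "z > 0"
  shows "\<bar>v\<bar> \<le> (z * v\<^sup>2 + 1 / z) / 2"
proof -
  have "0 \<le> (z * \<bar>v\<bar> - 1)\<^sup>2" by simp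
  then have "2 * z * \<bar>v\<bar> \<le> z\<^sup>2 * v\<^sup>2 + 1" by (simp add: power2_eq_square algebra_simps)
  then have "2 * z * \<bar>v\<bar> / z \<le> (z\<^sup>2 * v\<^sup>2 + 1) / z" using assms by (intro divide_right_mono) auto
  then show ?thesis using assms by (simp add: power2_eq_square field_simps)
qed



lemma hardy_step1:
  fixes U V :: "real \<Rightarrow> real" and x0 x :: real
  assumes x: "x0 < x" and Vm: "V \<in> borel_measurable borel"
    and bnd: "ennreal \<bar>U x\<bar> \<le> (\<integral>\<^sup>+y. indicator {x0..x} y * ennreal \<bar>V y\<bar> \<partial>lborel)"
  shows "ennreal ((U x)\<^sup>2) \<le> ennreal (2*(x-x0) powr (1/2)) *
     (\<integral>\<^sup>+y. indicator {x0..x} y * ennreal ((V y)\<^sup>2 * (y-x0) powr (1/2)) \<partial>lborel)"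
proof -
  define P where "P = (\<integral>\<^sup>+y. indicator {x0..x} y * ennreal ((V y)\<^sup>2 * (y-x0) powr (1/2)) \<partial>lborel)"
  have "ennreal ((U x)\<^sup>2) \<le> ennreal (2*(x-x0) powr (1/2)) * P"
  proof (cases "P = top")
    case True
    have "ennreal (2*(x-x0) powr (1/2)) \<noteq> 0" using x by simp
    then have "ennreal (2*(x-x0) powr (1/2)) * P = top" using True by (simp add: ennreal_mult_top)
    then show ?thesis by simp
  next
    case False
    then obtain p where p: "P = ennreal p" "0 \<le> p" by (cases P) auto
    define q where "q = 2*(x-x0) powr (1/2)"
    have q0: "0 \<le> q" by (simp add: q_def)
    have Q: "(\<integral>\<^sup>+y. indicator {x0..x} y * ennreal ((y-x0) powr (-1/2)) \<partial>lborel) = ennreal q"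
      using nn_powr_shift[of "-1/2" x0 x] x by (simp add: q_def)
    have main: "\<bar>U x\<bar> \<le> (l * p + q / l) / 2" if l: "l > 0" for l
    proof -
      have "ennreal \<bar>U x\<bar> \<le> (\<integral>\<^sup>+y. indicator {x0..x} y * ennreal \<bar>V y\<bar> \<partial>lborel)" using bnd .
      also have "\<dots> \<le> (\<integral>\<^sup>+y. ennreal (l/2) * (indicator {x0..x} y * ennreal ((V y)\<^sup>2 * (y-x0) powr (1/2)))
            + ennreal (1/(2*l)) * (indicator {x0..x} y * ennreal ((y-x0) powr (-1/2))) \<partial>lborel)"
      proof (rule nn_integral_mono_AE)
        show "AE y in lborel. indicator {x0..x} y * ennreal \<bar>V y\<bar> \<le> ennreal (l/2) * (indicator {x0..x} y * ennreal ((V y)\<^sup>2 * (y-x0) powr (1/2)))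
            + ennreal (1/(2*l)) * (indicator {x0..x} y * ennreal ((y-x0) powr (-1/2)))"
          using AE_lborel_singleton[of x0]
        proof eventually_elim
          case (elim y)
          show ?case
          proof (cases "y \<in> {x0..x}")
            case True
            then have yp: "y - x0 > 0" using elim by auto
            define w where "w = (y-x0) powr (1/2)"
            have w: "w > 0" using yp by (simp add: w_def)
            have wi: "(y-x0) powr (-1/2) = 1 / w" unfolding w_def using yp by (simp add: powr_minus_divide)
            have r: "\<bar>V y\<bar> \<le> l/2 * ((V y)\<^sup>2 * w) + 1/(2*l) * (1/w)"
            proof -
              have a: "\<bar>V y\<bar> \<le> ((l*w) * (V y)\<^sup>2 + 1 / (l*w)) / 2" using amgm_pt[of "l*w" "V y"] w l by simp
              have b: "((l*w) * (V y)\<^sup>2 + 1 / (l*w)) / 2 = l/2 * ((V y)\<^sup>2 * w) + 1/(2*l) * (1/w)"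
                by (simp add: add_divide_distrib mult_ac)
              show ?thesis using a b by linarith
            qed
            have "ennreal \<bar>V y\<bar> \<le> ennreal (l/2 * ((V y)\<^sup>2 * w) + 1/(2*l) * (1/w))"
              using r by (intro ennreal_leI)
            also have "\<dots> = ennreal (l/2) * ennreal ((V y)\<^sup>2 * w) + ennreal (1/(2*l)) * ennreal (1/w)"
            proof -
              have h1: "0 \<le> l/2" "0 \<le> (V y)\<^sup>2 * w" "0 \<le> 1/(2*l)" "0 \<le> 1/w" using w l by auto
              show ?thesis
                by (simp only: ennreal_plus[OF mult_nonneg_nonneg[OF h1(1,2)] mult_nonneg_nonneg[OF h1(3,4)]]
                  ennreal_mult[OF h1(1,2)] ennreal_mult[OF h1(3,4)])
            qed
            finally have "ennreal \<bar>V y\<bar> \<le> ennreal (l/2) * ennreal ((V y)\<^sup>2 * w) + ennreal (1/(2*l)) * ennreal (1/w)" .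
            then show ?thesis using True unfolding wi w_def by simp
          qed simp
        qed
      qed
      also have "\<dots> = ennreal (l/2) * P + ennreal (1/(2*l)) * ennreal q"
        using Vm by (subst nn_integral_add) (auto simp: nn_integral_cmult P_def Q Q[simplified])
      also have "\<dots> = ennreal ((l * p + q / l) / 2)"
      proof -
        have a: "ennreal (l/2) * ennreal p = ennreal (l/2*p)" by (rule ennreal_mult[symmetric]) (use l p in auto)
        have b: "ennreal (1/(2*l)) * ennreal q = ennreal (1/(2*l)*q)" by (rule ennreal_mult[symmetric]) (use l q0 in auto)
        have c: "ennreal (l/2*p) + ennreal (1/(2*l)*q) = ennreal (l/2*p + 1/(2*l)*q)"
          by (rule ennreal_plus[symmetric]) (use l p q0 in auto)
        have d: "l/2*p + 1/(2*l)*q = (l * p + q / l) / 2" by (simp add: field_simps)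
        show ?thesis unfolding p(1) a b c d ..
      qed
      finally show ?thesis using p l q0 by (subst (asm) ennreal_le_iff) auto
    qed
    have "(\<bar>U x\<bar>)\<^sup>2 \<le> p * q" by (rule amgm_sq) (use main p q0 in auto)
    then have "ennreal ((U x)\<^sup>2) \<le> ennreal (q * p)" by (intro ennreal_leI) (simp add: mult.commute)
    also have "\<dots> = ennreal q * ennreal p" using p q0 by (rule_tac ennreal_mult) auto
    finally show ?thesis using p by (simp add: q_def)
  qed
  then show ?thesis by (simp add: P_def)
qed



lemma hardy_right:
  fixes U V :: "real \<Rightarrow> real" and x0 e :: real
  assumes e: "x0 < e" and Vm: "V \<in> borel_measurable borel"
    and bnd: "\<And>x. x0 < x \<Longrightarrow> x \<le> e \<Longrightarrow> ennreal \<bar>U x\<bar> \<le> (\<integral>\<^sup>+y. indicator {x0..x} y * ennreal \<bar>V y\<bar> \<partial>lborel)"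
  shows "(\<integral>\<^sup>+x. indicator {x0<..e} x * ennreal ((U x)\<^sup>2 / (x-x0)\<^sup>2) \<partial>lborel)
     \<le> 4 * (\<integral>\<^sup>+y. indicator {x0..e} y * ennreal ((V y)\<^sup>2) \<partial>lborel)"
proof -
  define F where "F x y = (if x0 < x \<and> x \<le> e \<and> x0 \<le> y \<and> y \<le> x
     then ennreal (2*(x-x0) powr (-3/2) * ((V y)\<^sup>2 * (y-x0) powr (1/2))) else 0)" for x y
  have Fm: "case_prod F \<in> borel_measurable (lborel \<Otimes>\<^sub>M lborel)"
    unfolding F_def using Vm by measurable
  have s1: "(\<integral>\<^sup>+x. indicator {x0<..e} x * ennreal ((U x)\<^sup>2 / (x-x0)\<^sup>2) \<partial>lborel)
      \<le> (\<integral>\<^sup>+x. (\<integral>\<^sup>+y. F x y \<partial>lborel) \<partial>lborel)"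
  proof (rule nn_integral_mono)
    fix x
    show "indicator {x0<..e} x * ennreal ((U x)\<^sup>2 / (x-x0)\<^sup>2) \<le> (\<integral>\<^sup>+y. F x y \<partial>lborel)"
    proof (cases "x \<in> {x0<..e}")
      case False then show ?thesis by simp
    next
      case True
      have xp: "x - x0 > 0" using True by auto
      define P where "P = (\<integral>\<^sup>+y. indicator {x0..x} y * ennreal ((V y)\<^sup>2 * (y-x0) powr (1/2)) \<partial>lborel)"
      have "(\<integral>\<^sup>+y. F x y \<partial>lborel) = (\<integral>\<^sup>+y. ennreal (2*(x-x0) powr (-3/2)) *
          (indicator {x0..x} y * ennreal ((V y)\<^sup>2 * (y-x0) powr (1/2))) \<partial>lborel)"
        by (intro nn_integral_cong) (use True in \<open>auto simp: F_def indicator_def ennreal_mult\<close>)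
      also have "\<dots> = ennreal (2*(x-x0) powr (-3/2)) * P"
        unfolding P_def by (rule nn_integral_cmult) (use Vm in measurable)
      finally have eq: "(\<integral>\<^sup>+y. F x y \<partial>lborel) = ennreal (2*(x-x0) powr (-3/2)) * P" .
      have "ennreal ((U x)\<^sup>2 / (x-x0)\<^sup>2) = ennreal ((U x)\<^sup>2) * ennreal (1/(x-x0)\<^sup>2)"
        by (subst ennreal_mult''[symmetric]) auto
      also have "\<dots> \<le> (ennreal (2*(x-x0) powr (1/2)) * P) * ennreal (1/(x-x0)\<^sup>2)"
        by (intro mult_right_mono hardy_step1[OF _ Vm, of x0 x U, folded P_def] bnd) (use True in auto)
      also have "\<dots> = ennreal (2*(x-x0) powr (1/2) * (1/(x-x0)\<^sup>2)) * P"
        by (subst ennreal_mult''[of "1/(x-x0)\<^sup>2"]) (auto simp: mult_ac)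
      also have "2*(x-x0) powr (1/2) * (1/(x-x0)\<^sup>2) = 2*(x-x0) powr (-3/2)"
      proof -
        have "(x-x0) powr (-3/2) = (x-x0) powr (1/2 - 2)" by simp
        also have "\<dots> = (x-x0) powr (1/2) / (x-x0) powr 2" by (rule powr_diff)
        also have "(x-x0) powr 2 = (x-x0)\<^sup>2" using xp by (simp add: powr_numeral)
        finally show ?thesis by simp
      qed
      finally show ?thesis using True eq by simp
    qed
  qed
  have s2: "(\<integral>\<^sup>+x. (\<integral>\<^sup>+y. F x y \<partial>lborel) \<partial>lborel) = (\<integral>\<^sup>+y. (\<integral>\<^sup>+x. F x y \<partial>lborel) \<partial>lborel)"
    using lborel_pair.Fubini'[OF Fm] by simp
  have s3: "(\<integral>\<^sup>+y. (\<integral>\<^sup>+x. F x y \<partial>lborel) \<partial>lborel) \<le> (\<integral>\<^sup>+y. 4 * (indicator {x0..e} y * ennreal ((V y)\<^sup>2)) \<partial>lborel)"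
  proof (rule nn_integral_mono)
    fix y
    show "(\<integral>\<^sup>+x. F x y \<partial>lborel) \<le> 4 * (indicator {x0..e} y * ennreal ((V y)\<^sup>2))"
    proof (cases "x0 < y \<and> y \<le> e")
      case False
      then have "\<And>x. F x y = 0" by (auto simp: F_def)
      then show ?thesis by simp
    next
      case True
      have yp: "y - x0 > 0" using True by auto
      define c where "c = 2*((V y)\<^sup>2 * (y-x0) powr (1/2))"
      have c0: "0 \<le> c" by (simp add: c_def)
      have "(\<integral>\<^sup>+x. F x y \<partial>lborel) = (\<integral>\<^sup>+x. ennreal c * (indicator {y..e} x * ennreal ((x-x0) powr (-3/2))) \<partial>lborel)"
      proof (intro nn_integral_cong)
        fix x
        show "F x y = ennreal c * (indicator {y..e} x * ennreal ((x-x0) powr (-3/2)))"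
        proof (cases "x \<in> {y..e}")
          case True2: True
          have "F x y = ennreal (c * (x-x0) powr (-3/2))" using True True2 by (simp add: F_def c_def mult_ac)
          also have "\<dots> = ennreal c * ennreal ((x-x0) powr (-3/2))" by (rule ennreal_mult) (use c0 in auto)
          finally show ?thesis using True2 by simp
        qed (use True in \<open>auto simp: F_def\<close>)
      qed
      also have "\<dots> = ennreal c * ennreal (2*(y-x0) powr (-1/2) - 2*(e-x0) powr (-1/2))"
        using nn_powr_interval[of x0 y e] True by (subst nn_integral_cmult) auto
      also have "\<dots> \<le> ennreal c * ennreal (2*(y-x0) powr (-1/2))"
        by (intro mult_left_mono ennreal_leI) auto
      also have "\<dots> = ennreal (c * (2*(y-x0) powr (-1/2)))" by (rule ennreal_mult[symmetric]) (use c0 in auto)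
      also have "c * (2*(y-x0) powr (-1/2)) = 4 * (V y)\<^sup>2"
      proof -
        have "(y-x0) powr (1/2) * (y-x0) powr (-1/2) = 1" using yp by (simp add: powr_add[symmetric])
        then show ?thesis unfolding c_def by (simp add: algebra_simps)
      qed
      finally show ?thesis using True by (simp add: ennreal_mult)
    qed
  qed
  have s4: "(\<integral>\<^sup>+y. 4 * (indicator {x0..e} y * ennreal ((V y)\<^sup>2)) \<partial>lborel)
     = 4 * (\<integral>\<^sup>+y. indicator {x0..e} y * ennreal ((V y)\<^sup>2) \<partial>lborel)"
    by (rule nn_integral_cmult) (use Vm in measurable)
  show ?thesis using s1 s2 s3 s4 by simp
qed



lemma W11_int:
  assumes "W11_deriv f g" "0 \<le> s" "t \<le> 1"
  shows "set_integrable lborel {s..t} g"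
proof (rule set_integrable_subset[of _ "{0..1}"])
  show "set_integrable lborel {0..1} g" using assms(1) unfolding W11_deriv_def by blast
qed (use assms in auto)

lemma W11_diff:
  assumes W: "W11_deriv f g" and st: "0 \<le> s" "s \<le> t" "t \<le> 1"
  shows "f t - f s = (LINT x:{s..t}|lborel. g x)"
proof -
  have i: "set_integrable lborel {a..b} g" if "0 \<le> a" "b \<le> 1" for a b using W11_int[OF W that] .
  have e: "(LINT x:{a..b}|lborel. g x) = integral {a..b} g" if "0 \<le> a" "b \<le> 1" for a b
    using set_borel_integral_eq_integral(2)[OF i[OF that]] .
  have io: "g integrable_on {0..t}" using set_borel_integral_eq_integral(1)[OF i[of 0 t]] st by auto
  have c: "integral {0..s} g + integral {s..t} g = integral {0..t} g"
    by (rule Henstock_Kurzweil_Integration.integral_combine[OF st(1,2) io])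
  have rep: "\<forall>x\<in>{0..1}. f x = f 0 + (LINT y:{0..x}|lborel. g y)" using W unfolding W11_deriv_def by blast
  have "f t = f 0 + (LINT y:{0..t}|lborel. g y)" by (rule bspec[OF rep]) (use st in auto)
  moreover have "f s = f 0 + (LINT y:{0..s}|lborel. g y)" by (rule bspec[OF rep]) (use st in auto)
  ultimately have "f t - f s = integral {0..t} g - integral {0..s} g" using e[of 0 t] e[of 0 s] st by linarith
  then show ?thesis using c e[of s t] st by linarith
qed

lemma W11_cont:
  assumes W: "W11_deriv f g"
  shows "continuous_on {0..1} f"
proof -
  have io: "g integrable_on {0..1}" using set_borel_integral_eq_integral(1)[OF W11_int[OF W, of 0 1]] by auto
  have "continuous_on {0..1} (\<lambda>x. f 0 + integral {0..x} g)"
    by (intro continuous_intros indefinite_integral_continuous_1 io)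
  moreover have "f 0 + integral {0..x} g = f x" if x: "x \<in> {0..1}" for x
  proof -
    have "f x = f 0 + (LINT y:{0..x}|lborel. g y)" using W x unfolding W11_deriv_def by blast
    also have "(LINT y:{0..x}|lborel. g y) = integral {0..x} g"
      by (rule set_borel_integral_eq_integral(2)[OF W11_int[OF W]]) (use x in auto)
    finally show ?thesis by simp
  qed
  ultimately show ?thesis by (rule continuous_on_eq)
qed

lemma gronwall_right:
  fixes f g :: "real \<Rightarrow> real"
  assumes W: "W11_deriv f g" and ae: "AE x in lborel. x \<in> {0..1} \<longrightarrow> (x - x0) * g x \<le> K * f x"
    and x0: "0 \<le> x0" "x0 < s" "s \<le> 1" and K: "0 < K"
  shows "f 1 * ((s-x0)/(1-x0)) powr K \<le> f s"
proof -
  have fc: "continuous_on {0..1} f" by (rule W11_cont[OF W])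
  define h where "h y = K / (y - x0) * f y" for y
  have hc: "continuous_on {s..1} h"
    unfolding h_def using x0 by (intro continuous_intros continuous_on_subset[OF fc]) auto
  define R where "R t = integral {s..t} h" for t
  have key: "f t \<le> f s + R t" if t: "t \<in> {s..1}" for t
  proof -
    have "f t - f s = (LINT x:{s..t}|lborel. g x)" using W11_diff[OF W] x0 t by auto
    also have "\<dots> \<le> (LINT x:{s..t}|lborel. h x)"
    proof (rule set_integral_mono_AE)
      show "set_integrable lborel {s..t} g" using W11_int[OF W] x0 t by auto
      show "set_integrable lborel {s..t} h" unfolding set_integrable_def
        using t by (intro borel_integrable_compact continuous_on_subset[OF hc]) auto
      show "AE x\<in>{s..t} in lborel. g x \<le> h x"
        using ae
      proof eventually_elim
        case (elim y)
        show ?case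
        proof
          assume y: "y \<in> {s..t}"
          then have yp: "y - x0 > 0" "y \<in> {0..1}" using x0 t by auto
          then have "(y - x0) * g y \<le> K * f y" using elim by auto
          then have "g y \<le> K * f y / (y - x0)" using yp by (simp add: pos_le_divide_eq mult.commute)
          then show "g y \<le> h y" unfolding h_def by simp
        qed
      qed
    qed
    also have "\<dots> = R t"
    proof -
      have "set_integrable lborel {s..t} h" unfolding set_integrable_def
        using t by (intro borel_integrable_compact continuous_on_subset[OF hc]) auto
      then show ?thesis unfolding R_def by (rule set_borel_integral_eq_integral(2))
    qed
    finally show ?thesis by simp
  qed
  define Q where "Q t = (f s + R t) / (t - x0) powr K" for t
  define Q' where "Q' t = (h t * (t - x0) powr K - (f s + R t) * (K * (t - x0) powr (K - 1)))
       / ((t - x0) powr K * (t - x0) powr K)" for t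
  have dQ: "(Q has_vector_derivative Q' t) (at t within {s..1})" if t: "t \<in> {s..1}" for t
  proof -
    have tp: "t - x0 > 0" using t x0 by auto
    have dR: "(R has_real_derivative h t) (at t within {s..1})"
      unfolding R_def by (rule integral_has_real_derivative[OF hc t])
    have dP: "((\<lambda>t. (t - x0) powr K) has_real_derivative (K * (t - x0) powr (K - 1))) (at t within {s..1})"
    proof -
      have "((\<lambda>t. (t - x0) powr K) has_real_derivative (K * (t - x0) powr (K - 1) * 1)) (at t)"
        by (intro derivative_eq_intros DERIV_powr) (use tp in auto)
      then show ?thesis by (simp add: has_field_derivative_at_within)
    qed
    have "(Q has_real_derivative Q' t) (at t within {s..1})"
    proof -
      have dN: "((\<lambda>t. f s + R t) has_real_derivative h t) (at t within {s..1})"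
        using DERIV_add[OF DERIV_const dR] by simp
      show ?thesis unfolding Q_def Q'_def
        by (rule DERIV_divide[OF dN dP]) (use tp in auto)
    qed
    then show ?thesis by (simp add: has_real_derivative_iff_has_vector_derivative)
  qed
  have Q'np: "Q' t \<le> 0" if t: "t \<in> {s..1}" for t
  proof -
    have tp: "t - x0 > 0" using t x0 by auto
    have e1: "h t * (t - x0) powr K = K * (t - x0) powr (K - 1) * f t"
    proof -
      have a: "(t - x0) powr K = (t - x0) powr (K - 1) * (t - x0)"
        using powr_add[of "t-x0" "K-1" 1] tp by simp
      show ?thesis unfolding h_def a using tp by (simp add: divide_simps mult_ac)
    qed
    have num: "h t * (t - x0) powr K - (f s + R t) * (K * (t - x0) powr (K - 1))
        = K * (t - x0) powr (K - 1) * (f t - (f s + R t))"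
      unfolding e1 by (simp add: algebra_simps)
    have "K * (t - x0) powr (K - 1) * (f t - (f s + R t)) \<le> 0"
      using key[OF t] K by (intro mult_nonneg_nonpos) auto
    then show ?thesis unfolding Q'_def num by (intro divide_nonpos_nonneg) auto
  qed
  have "(Q' has_integral (Q 1 - Q s)) {s..1}"
    by (rule fundamental_theorem_of_calculus[OF x0(3)]) (use dQ in auto)
  then have "Q 1 - Q s \<le> 0"
    using has_integral_le[OF _ has_integral_0, of Q' "Q 1 - Q s" "{s..1}"] Q'np by auto
  then have Q1: "Q 1 \<le> Q s" by simp
  have p1: "(1 - x0) powr K > 0" "(s - x0) powr K > 0" using x0 by auto
  have "f 1 \<le> f s + R 1" using key x0 by auto
  also have "\<dots> = Q 1 * (1 - x0) powr K" unfolding Q_def using p1 by simp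
  also have "\<dots> \<le> Q s * (1 - x0) powr K" using Q1 p1 by (intro mult_right_mono) auto
  also have "Q s = f s / (s - x0) powr K" unfolding Q_def R_def by simp
  finally have "f 1 \<le> f s / (s - x0) powr K * (1 - x0) powr K" .
  then have "f 1 * (s - x0) powr K / (1 - x0) powr K \<le> (f s / (s - x0) powr K * (1 - x0) powr K) * (s - x0) powr K / (1 - x0) powr K"
    using p1 by (intro divide_right_mono mult_right_mono) auto
  also have "\<dots> = f s" using p1 by simp
  finally have "f 1 * (s - x0) powr K / (1 - x0) powr K \<le> f s" .
  moreover have "((s-x0)/(1-x0)) powr K = (s - x0) powr K / (1 - x0) powr K"
    using x0 by (auto intro: powr_divide)
  ultimately show ?thesis by (simp add: mult_ac times_divide_eq_right)
qed

lemma gronwall_left: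
  fixes f g :: "real \<Rightarrow> real"
  assumes W: "W11_deriv f g" and ae: "AE x in lborel. x \<in> {0..1} \<longrightarrow> (x - x0) * g x \<le> K * f x"
    and x0: "0 \<le> s" "s < x0" "x0 \<le> 1" and K: "0 < K"
  shows "f 0 * ((x0-s)/x0) powr K \<le> f s"
proof -
  have fc: "continuous_on {0..1} f" by (rule W11_cont[OF W])
  define h where "h y = K / (x0 - y) * f y" for y
  have hc: "continuous_on {0..s} h"
    unfolding h_def using x0 by (intro continuous_intros continuous_on_subset[OF fc]) auto
  have hi: "set_integrable lborel {a..b} h" if "0 \<le> a" "b \<le> s" for a b
    unfolding set_integrable_def using that by (intro borel_integrable_compact continuous_on_subset[OF hc]) auto
  have hio: "h integrable_on {0..s}" using set_borel_integral_eq_integral(1)[OF hi[of 0 s]] by auto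
  define R where "R t = integral {0..s} h - integral {0..t} h" for t
  have key: "f t \<le> f s + R t" if t: "t \<in> {0..s}" for t
  proof -
    have "- integral {t..s} h = (LINT x:{t..s}|lborel. - h x)"
      using set_borel_integral_eq_integral(2)[OF hi[of t s]] t by (simp add: set_lebesgue_integral_def)
    also have "\<dots> \<le> (LINT x:{t..s}|lborel. g x)"
    proof (rule set_integral_mono_AE)
      show "set_integrable lborel {t..s} g" using W11_int[OF W] x0 t by auto
      show "set_integrable lborel {t..s} (\<lambda>x. - h x)" using hi[of t s] t unfolding set_integrable_def by simp
      show "AE x\<in>{t..s} in lborel. - h x \<le> g x"
        using ae
      proof eventually_elim
        case (elim y)
        show ?case
        proof
          assume y: "y \<in> {t..s}"
          then have yp: "x0 - y > 0" "y \<in> {0..1}" using x0 t by auto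
          then have "(y - x0) * g y \<le> K * f y" using elim by auto
          then have "- (K * f y) \<le> g y * (x0 - y)" by (simp add: algebra_simps)
          then have "(- (K * f y)) / (x0 - y) \<le> g y" using yp by (subst divide_le_eq) auto
          then show "- h y \<le> g y" unfolding h_def by simp
        qed
      qed
    qed
    also have "\<dots> = f s - f t" using W11_diff[OF W] x0 t by auto
    finally have a: "- integral {t..s} h \<le> f s - f t" .
    have "integral {0..t} h + integral {t..s} h = integral {0..s} h"
      by (rule Henstock_Kurzweil_Integration.integral_combine[OF _ _ hio]) (use t in auto)
    then show ?thesis using a unfolding R_def by linarith
  qed
  define Q where "Q t = (f s + R t) / (x0 - t) powr K" for t
  define Q' where "Q' t = ((- h t) * (x0 - t) powr K - (f s + R t) * (K * (x0 - t) powr (K - 1) * (- 1)))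
       / ((x0 - t) powr K * (x0 - t) powr K)" for t
  have dQ: "(Q has_vector_derivative Q' t) (at t within {0..s})" if t: "t \<in> {0..s}" for t
  proof -
    have tp: "x0 - t > 0" using t x0 by auto
    have dI: "((\<lambda>t. integral {0..t} h) has_real_derivative h t) (at t within {0..s})"
      by (rule integral_has_real_derivative[OF hc t])
    have dN: "((\<lambda>t. f s + R t) has_real_derivative - h t) (at t within {0..s})"
      unfolding R_def using DERIV_add[OF DERIV_const DERIV_diff[OF DERIV_const dI]] by simp
    have dP: "((\<lambda>t. (x0 - t) powr K) has_real_derivative (K * (x0 - t) powr (K - 1) * (- 1))) (at t within {0..s})"
    proof -
      have "((\<lambda>t. (x0 - t) powr K) has_real_derivative (K * (x0 - t) powr (K - 1) * (0 - 1))) (at t)"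
        by (intro derivative_eq_intros DERIV_powr) (use tp in auto)
      then show ?thesis by (simp add: has_field_derivative_at_within)
    qed
    have "(Q has_real_derivative Q' t) (at t within {0..s})"
      unfolding Q_def Q'_def by (rule DERIV_divide[OF dN dP]) (use tp in auto)
    then show ?thesis by (simp add: has_real_derivative_iff_has_vector_derivative)
  qed
  have Q'nn: "0 \<le> Q' t" if t: "t \<in> {0..s}" for t
  proof -
    have tp: "x0 - t > 0" using t x0 by auto
    have e1: "h t * (x0 - t) powr K = K * (x0 - t) powr (K - 1) * f t"
    proof -
      have a: "(x0 - t) powr K = (x0 - t) powr (K - 1) * (x0 - t)"
        using powr_add[of "x0-t" "K-1" 1] tp by simp
      show ?thesis unfolding h_def a using tp by (simp add: divide_simps mult_ac)
    qed
    have num: "(- h t) * (x0 - t) powr K - (f s + R t) * (K * (x0 - t) powr (K - 1) * (- 1))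
        = K * (x0 - t) powr (K - 1) * ((f s + R t) - f t)"
      using e1 by (simp add: algebra_simps)
    have "0 \<le> K * (x0 - t) powr (K - 1) * ((f s + R t) - f t)"
      using key[OF t] K by (intro mult_nonneg_nonneg) auto
    then show ?thesis unfolding Q'_def num by (intro divide_nonneg_nonneg) auto
  qed
  have "(Q' has_integral (Q s - Q 0)) {0..s}"
    by (rule fundamental_theorem_of_calculus[OF x0(1)]) (use dQ in auto)
  then have "0 \<le> Q s - Q 0"
    using has_integral_le[OF has_integral_0 _, of Q' "Q s - Q 0" "{0..s}"] Q'nn by auto
  then have Q1: "Q 0 \<le> Q s" by simp
  have p1: "x0 powr K > 0" "(x0 - s) powr K > 0" using x0 by auto
  have "f 0 \<le> f s + R 0" using key x0 by auto
  also have "\<dots> = Q 0 * x0 powr K" unfolding Q_def using p1 by simp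
  also have "\<dots> \<le> Q s * x0 powr K" using Q1 p1 by (intro mult_right_mono) auto
  also have "Q s = f s / (x0 - s) powr K" unfolding Q_def R_def by simp
  finally have "f 0 \<le> f s / (x0 - s) powr K * x0 powr K" .
  then have "f 0 * (x0 - s) powr K / x0 powr K \<le> (f s / (x0 - s) powr K * x0 powr K) * (x0 - s) powr K / x0 powr K"
    using p1 by (intro divide_right_mono mult_right_mono) auto
  also have "\<dots> = f s" using p1 by simp
  finally have "f 0 * (x0 - s) powr K / x0 powr K \<le> f s" .
  moreover have "((x0-s)/x0) powr K = (x0 - s) powr K / x0 powr K"
    using x0 by (auto intro: powr_divide)
  ultimately show ?thesis by (simp add: mult_ac times_divide_eq_right)
qed



lemma nn_reflect:
  fixes f :: "real \<Rightarrow> ennreal"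
  assumes "f \<in> borel_measurable borel"
  shows "(\<integral>\<^sup>+x. f x \<partial>lborel) = (\<integral>\<^sup>+x. f (- x) \<partial>lborel)"
  using nn_integral_real_affine[OF assms, of "-1" 0] by simp

lemma hardy_left:
  fixes U V :: "real \<Rightarrow> real" and x0 s :: real
  assumes s: "s < x0" and Vm: "V \<in> borel_measurable borel"
    and Um: "(\<lambda>x. indicator {s..<x0} x * ennreal ((U x)\<^sup>2 / (x-x0)\<^sup>2)) \<in> borel_measurable borel"
    and bnd: "\<And>x. s \<le> x \<Longrightarrow> x < x0 \<Longrightarrow> ennreal \<bar>U x\<bar> \<le> (\<integral>\<^sup>+y. indicator {x..x0} y * ennreal \<bar>V y\<bar> \<partial>lborel)"
  shows "(\<integral>\<^sup>+x. indicator {s..<x0} x * ennreal ((U x)\<^sup>2 / (x-x0)\<^sup>2) \<partial>lborel)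
     \<le> 4 * (\<integral>\<^sup>+y. indicator {s..x0} y * ennreal ((V y)\<^sup>2) \<partial>lborel)"
proof -
  have Vm': "(\<lambda>y. V (- y)) \<in> borel_measurable borel" using Vm by measurable
  have hr: "(\<integral>\<^sup>+x. indicator {-x0<..-s} x * ennreal ((U (-x))\<^sup>2 / (x - (-x0))\<^sup>2) \<partial>lborel)
     \<le> 4 * (\<integral>\<^sup>+y. indicator {-x0..-s} y * ennreal ((V (-y))\<^sup>2) \<partial>lborel)"
  proof (rule hardy_right[OF _ Vm'])
    show "- x0 < - s" using s by simp
    fix x assume x: "- x0 < x" "x \<le> - s"
    have "ennreal \<bar>U (- x)\<bar> \<le> (\<integral>\<^sup>+y. indicator {-x..x0} y * ennreal \<bar>V y\<bar> \<partial>lborel)"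
      using bnd[of "-x"] x by auto
    also have "\<dots> = (\<integral>\<^sup>+y. indicator {-x..x0} (-y) * ennreal \<bar>V (-y)\<bar> \<partial>lborel)"
      by (rule nn_reflect) (use Vm in measurable)
    also have "\<dots> = (\<integral>\<^sup>+y. indicator {-x0..x} y * ennreal \<bar>V (-y)\<bar> \<partial>lborel)"
      by (intro nn_integral_cong) (auto simp: indicator_def)
    finally show "ennreal \<bar>U (- x)\<bar> \<le> (\<integral>\<^sup>+y. indicator {-x0..x} y * ennreal \<bar>V (-y)\<bar> \<partial>lborel)" .
  qed
  have l: "(\<integral>\<^sup>+x. indicator {s..<x0} x * ennreal ((U x)\<^sup>2 / (x-x0)\<^sup>2) \<partial>lborel)
     = (\<integral>\<^sup>+x. indicator {-x0<..-s} x * ennreal ((U (-x))\<^sup>2 / (x - (-x0))\<^sup>2) \<partial>lborel)"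
  proof -
    have "(\<integral>\<^sup>+x. indicator {s..<x0} x * ennreal ((U x)\<^sup>2 / (x-x0)\<^sup>2) \<partial>lborel)
       = (\<integral>\<^sup>+x. indicator {s..<x0} (-x) * ennreal ((U (-x))\<^sup>2 / (-x-x0)\<^sup>2) \<partial>lborel)"
      by (rule nn_reflect[OF Um])
    also have "\<dots> = (\<integral>\<^sup>+x. indicator {-x0<..-s} x * ennreal ((U (-x))\<^sup>2 / (x - (-x0))\<^sup>2) \<partial>lborel)"
    proof (intro nn_integral_cong)
      fix x
      have "(-x-x0)\<^sup>2 = (x - (-x0))\<^sup>2" by (simp add: power2_eq_square algebra_simps)
      then show "indicator {s..<x0} (-x) * ennreal ((U (-x))\<^sup>2 / (-x-x0)\<^sup>2) =
          indicator {-x0<..-s} x * ennreal ((U (-x))\<^sup>2 / (x - (-x0))\<^sup>2)"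
        by (auto simp: indicator_def)
    qed
    finally show ?thesis .
  qed
  have r: "(\<integral>\<^sup>+y. indicator {s..x0} y * ennreal ((V y)\<^sup>2) \<partial>lborel)
      = (\<integral>\<^sup>+y. indicator {-x0..-s} y * ennreal ((V (-y))\<^sup>2) \<partial>lborel)"
  proof -
    have "(\<integral>\<^sup>+y. indicator {s..x0} y * ennreal ((V y)\<^sup>2) \<partial>lborel)
       = (\<integral>\<^sup>+y. indicator {s..x0} (-y) * ennreal ((V (-y))\<^sup>2) \<partial>lborel)"
      by (rule nn_reflect) (use Vm in measurable)
    also have "\<dots> = (\<integral>\<^sup>+y. indicator {-x0..-s} y * ennreal ((V (-y))\<^sup>2) \<partial>lborel)"
      by (intro nn_integral_cong) (auto simp: indicator_def)
    finally show ?thesis .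
  qed
  show ?thesis unfolding l r by (rule hr)
qed

lemma nn_ln_interval:
  fixes x0 p q :: real
  assumes "x0 < p" "p \<le> q"
  shows "(\<integral>\<^sup>+x. indicator {p..q} x * ennreal (1 / (x-x0)) \<partial>lborel) = ennreal (ln (q-x0) - ln (p-x0))"
proof -
  have d: "((\<lambda>x. ln (x-x0)) has_vector_derivative 1 / (x-x0)) (at x within {p..q})"
    if "x \<in> {p..q}" for x
  proof -
    have xp: "x - x0 > 0" using that assms by auto
    have "((\<lambda>x. ln (x-x0)) has_real_derivative (1 / (x-x0))) (at x)"
      by (rule derivative_eq_intros refl | use xp in \<open>auto simp: field_simps\<close>)+
    then show ?thesis
      by (simp add: has_real_derivative_iff_has_vector_derivative[symmetric] has_field_derivative_at_within)
  qed
  have "((\<lambda>x. 1 / (x-x0)) has_integral (ln (q-x0) - ln (p-x0))) {p..q}"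
    by (rule fundamental_theorem_of_calculus[OF assms(2)]) (use d in auto)
  then have h: "((\<lambda>x. indicator {p..q} x * (1 / (x-x0))) has_integral (ln (q-x0) - ln (p-x0))) UNIV"
  proof -
    assume a: "((\<lambda>x. 1 / (x-x0)) has_integral (ln (q-x0) - ln (p-x0))) {p..q}"
    have e: "(\<lambda>x. indicator {p..q} x * (1 / (x-x0))) = (\<lambda>x. if x \<in> {p..q} then 1 / (x-x0) else 0)"
      by (auto simp: indicator_def)
    show ?thesis unfolding e has_integral_restrict_UNIV using a by simp
  qed
  have nn: "0 \<le> indicator {p..q} x * (1 / (x-x0))" for x using assms by (auto simp: indicator_def)
  have "(\<integral>\<^sup>+x. ennreal (indicator {p..q} x * (1 / (x-x0))) \<partial>lborel) = ennreal (ln (q-x0) - ln (p-x0))"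
    by (rule nn_integral_has_integral_lborel[OF _ nn h]) auto
  moreover have "\<And>x. ennreal (indicator {p..q} x * (1 / (x-x0))) = indicator {p..q} x * ennreal (1 / (x-x0))"
    by (auto simp: indicator_def)
  ultimately show ?thesis by simp
qed



lemma u_x0_zero:
  fixes u W :: "real \<Rightarrow> real"
  assumes uc: "continuous_on {0..1} u" and x0: "0 < x0" "x0 < 1" and C: "C > 0"
    and Wnn: "\<And>x. x \<in> {0..1} \<Longrightarrow> 0 \<le> W x"
    and Wpos: "\<And>x. x \<in> {0..1} \<Longrightarrow> x \<noteq> x0 \<Longrightarrow> 0 < W x"
    and Wub: "\<And>x. x \<in> {0..1} \<Longrightarrow> W x \<le> C * \<bar>x - x0\<bar>"
    and int: "set_integrable lborel {0..1} (\<lambda>x. (u x)\<^sup>2 / W x)"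
  shows "u x0 = 0"
proof (rule ccontr)
  assume ne: "u x0 \<noteq> 0"
  define m where "m = (u x0)\<^sup>2 / 2"
  have m: "m > 0" using ne by (simp add: m_def)
  have uc2: "continuous_on {0..1} (\<lambda>x. (u x)\<^sup>2)" by (intro continuous_intros uc)
  obtain d where d: "d > 0" "\<And>x. x \<in> {0..1} \<Longrightarrow> dist x x0 < d \<Longrightarrow> dist ((u x)\<^sup>2) ((u x0)\<^sup>2) < m"
    using uc2 m x0 unfolding continuous_on_iff by (metis atLeastAtMost_iff less_eq_real_def)
  define \<delta> where "\<delta> = min (d/2) (1 - x0)"
  have \<delta>: "\<delta> > 0" "\<delta> \<le> 1 - x0" "\<delta> < d" using d x0 by (auto simp: \<delta>_def)
  define I where "I = (LINT x:{0..1}|lborel. (u x)\<^sup>2 / W x)"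
  have nnI: "(\<integral>\<^sup>+x. indicator {0..1} x * ennreal ((u x)\<^sup>2 / W x) \<partial>lborel) = ennreal I"
    unfolding I_def by (rule set_nn_eq[OF int]) (use Wnn in auto)
  have I0: "0 \<le> I" unfolding I_def set_lebesgue_integral_def
    by (rule Bochner_Integration.integral_nonneg) (use Wnn in \<open>auto simp: indicator_def\<close>)
  have bound: "m / C * (ln \<delta> - ln \<epsilon>) \<le> I" if \<epsilon>: "0 < \<epsilon>" "\<epsilon> < \<delta>" for \<epsilon>
  proof -
    have "ennreal (m / C) * ennreal (ln \<delta> - ln \<epsilon>)
        = ennreal (m / C) * (\<integral>\<^sup>+x. indicator {x0+\<epsilon>..x0+\<delta>} x * ennreal (1 / (x-x0)) \<partial>lborel)"
      using nn_ln_interval[of x0 "x0+\<epsilon>" "x0+\<delta>"] \<epsilon> by simp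
    also have "\<dots> = (\<integral>\<^sup>+x. ennreal (m / C) * (indicator {x0+\<epsilon>..x0+\<delta>} x * ennreal (1 / (x-x0))) \<partial>lborel)"
      by (rule nn_integral_cmult[symmetric]) measurable
    also have "\<dots> \<le> (\<integral>\<^sup>+x. indicator {0..1} x * ennreal ((u x)\<^sup>2 / W x) \<partial>lborel)"
    proof (rule nn_integral_mono)
      fix x
      show "ennreal (m / C) * (indicator {x0+\<epsilon>..x0+\<delta>} x * ennreal (1 / (x-x0))) \<le> indicator {0..1} x * ennreal ((u x)\<^sup>2 / W x)"
      proof (cases "x \<in> {x0+\<epsilon>..x0+\<delta>}")
        case True
        have xp: "x - x0 > 0" "x \<in> {0..1}" "x \<noteq> x0" using True \<epsilon> \<delta> x0 by auto
        have "dist x x0 < d" using True \<delta> \<epsilon> by (auto simp: dist_real_def)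
        then have "dist ((u x)\<^sup>2) ((u x0)\<^sup>2) < m" using d xp by auto
        then have "\<bar>(u x)\<^sup>2 - (u x0)\<^sup>2\<bar> < (u x0)\<^sup>2 / 2" unfolding m_def dist_real_def .
        then have um: "m \<le> (u x)\<^sup>2" unfolding m_def by linarith
        have Wp: "0 < W x" "W x \<le> C * (x - x0)" using Wpos[OF xp(2,3)] Wub[OF xp(2)] xp by auto
        have "m / C * (1 / (x - x0)) = m / (C * (x - x0))" by simp
        also have "\<dots> \<le> m / W x" using Wp m by (intro divide_left_mono) auto
        also have "\<dots> \<le> (u x)\<^sup>2 / W x" using um Wp by (intro divide_right_mono) auto
        finally have r: "m / C * (1 / (x - x0)) \<le> (u x)\<^sup>2 / W x" .
        have "ennreal (m / C) * ennreal (1 / (x-x0)) = ennreal (m / C * (1 / (x - x0)))"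
          using m C xp by (subst ennreal_mult) auto
        also have "\<dots> \<le> ennreal ((u x)\<^sup>2 / W x)" using r by (rule ennreal_leI)
        finally show ?thesis using True xp by simp
      qed simp
    qed
    also have "\<dots> = ennreal I" by (rule nnI)
    finally have "ennreal (m / C) * ennreal (ln \<delta> - ln \<epsilon>) \<le> ennreal I" .
    moreover have "ln \<epsilon> \<le> ln \<delta>" using \<epsilon> by auto
    ultimately have "ennreal (m / C * (ln \<delta> - ln \<epsilon>)) \<le> ennreal I"
      using m C by (subst ennreal_mult) auto
    then show ?thesis using I0 by (subst (asm) ennreal_le_iff) auto
  qed
  define \<epsilon> where "\<epsilon> = \<delta> * exp (- (I * C / m + 1))"
  have "0 \<le> I * C / m" using I0 m C by simp
  then have e1: "exp (- (I * C / m + 1)) < 1" by simp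
  have \<epsilon>: "0 < \<epsilon>" "\<epsilon> < \<delta>" unfolding \<epsilon>_def using \<delta> e1 by auto
  have "ln \<epsilon> = ln \<delta> - (I * C / m + 1)" unfolding \<epsilon>_def using \<delta> by (simp add: ln_mult)
  then have "m / C * (ln \<delta> - ln \<epsilon>) = I + m / C" using m C by (simp add: field_simps)
  then show False using bound[OF \<epsilon>] m C by (smt (verit) divide_pos_pos)
qed

lemma deg_lower:
  fixes f g :: "real \<Rightarrow> real"
  assumes W: "W11_deriv f g" and ae: "AE x in lborel. x \<in> {0..1} \<longrightarrow> (x - x0) * g x \<le> K * f x"
    and x0: "0 < x0" "x0 < 1" and K: "0 < K" and pos: "f 0 > 0" "f 1 > 0" "f x0 \<ge> 0"
  shows "\<exists>c>0. \<forall>x\<in>{0..1}. c * \<bar>x - x0\<bar> powr K \<le> f x"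
proof -
  define c where "c = min (f 1 / (1 - x0) powr K) (f 0 / x0 powr K)"
  have c: "c > 0" unfolding c_def using pos x0 by auto
  have cle: "c \<le> f 1 / (1 - x0) powr K" "c \<le> f 0 / x0 powr K" unfolding c_def by auto
  have "c * \<bar>x - x0\<bar> powr K \<le> f x" if x: "x \<in> {0..1}" for x
  proof (cases x0 x rule: linorder_cases)
    case less
    have "c * \<bar>x - x0\<bar> powr K \<le> f 1 / (1 - x0) powr K * (x - x0) powr K"
      using mult_right_mono[OF cle(1), of "(x-x0) powr K"] less by simp
    also have "\<dots> = f 1 * ((x - x0) / (1 - x0)) powr K" using less x0 by (simp add: powr_divide)
    also have "\<dots> \<le> f x" by (rule gronwall_right[OF W ae]) (use x0 x less K in auto)
    finally show ?thesis .
  next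
    case equal
    then show ?thesis using pos by simp
  next
    case greater
    have "c * \<bar>x - x0\<bar> powr K \<le> f 0 / x0 powr K * (x0 - x) powr K"
      using mult_right_mono[OF cle(2), of "(x0-x) powr K"] greater by simp
    also have "\<dots> = f 0 * ((x0 - x) / x0) powr K" using greater x0 x by (simp add: powr_divide)
    also have "\<dots> \<le> f x" by (rule gronwall_left[OF W ae]) (use x0 x greater K in auto)
    finally show ?thesis .
  qed
  then show ?thesis using c by blast
qed

lemma strong_upper:
  fixes f :: "real \<Rightarrow> real"
  assumes S: "strong_deg x0 f K" and fx0: "f x0 = 0" and x0: "0 \<le> x0" "x0 \<le> 1"
  shows "\<exists>M. \<forall>x\<in>{0..1}. f x \<le> M * \<bar>x - x0\<bar>"
proof -
  obtain g M where W: "W11_deriv f g" and gM: "AE x in lborel. x \<in> {0..1} \<longrightarrow> \<bar>g x\<bar> \<le> M"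
    using S unfolding strong_deg_def W1inf_deriv_def by blast
  have lint: "(LINT y:{a..b}|lborel. M) = M * (b - a)" if "a \<le> b" for a b
  proof -
    have "(LINT y:{a..b}|lborel. M) = integral {a..b} (\<lambda>y. M)"
      by (rule set_borel_integral_eq_integral(2)) (unfold set_integrable_def, intro borel_integrable_compact, auto)
    then show ?thesis using that by simp
  qed
  have ci: "set_integrable lborel {a..b} (\<lambda>y. M)" for a b :: real
    by (unfold set_integrable_def, intro borel_integrable_compact, auto)
  have "f x \<le> M * \<bar>x - x0\<bar>" if x: "x \<in> {0..1}" for x
  proof (cases "x0 \<le> x")
    case True
    have "f x = f x - f x0" using fx0 by simp
    also have "\<dots> = (LINT y:{x0..x}|lborel. g y)" using W11_diff[OF W] True x x0 by auto
    also have "\<dots> \<le> (LINT y:{x0..x}|lborel. M)"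
    proof (rule set_integral_mono_AE)
      show "set_integrable lborel {x0..x} g" using W11_int[OF W] x x0 by auto
      show "set_integrable lborel {x0..x} (\<lambda>y. M)" by (rule ci)
      show "AE y\<in>{x0..x} in lborel. g y \<le> M" using gM
        by eventually_elim (use x x0 in auto)
    qed
    also have "\<dots> = M * \<bar>x - x0\<bar>" using True lint by simp
    finally show ?thesis .
  next
    case False
    have "- f x = f x0 - f x" using fx0 by simp
    also have "\<dots> = (LINT y:{x..x0}|lborel. g y)" using W11_diff[OF W] False x x0 by auto
    also have "\<dots> \<ge> (LINT y:{x..x0}|lborel. - M)"
    proof (rule set_integral_mono_AE)
      show "set_integrable lborel {x..x0} g" using W11_int[OF W] x x0 by auto
      show "set_integrable lborel {x..x0} (\<lambda>y. - M)" by (unfold set_integrable_def, intro borel_integrable_compact, auto)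
      show "AE y\<in>{x..x0} in lborel. - M \<le> g y" using gM
        by eventually_elim (use x x0 in auto)
    qed
    finally have "(LINT y:{x..x0}|lborel. - M) \<le> - f x" .
    moreover have "(LINT y:{x..x0}|lborel. - M) = - M * (x0 - x)"
    proof -
      have "(LINT y:{x..x0}|lborel. - M) = integral {x..x0} (\<lambda>y. - M)"
        by (rule set_borel_integral_eq_integral(2)) (unfold set_integrable_def, intro borel_integrable_compact, auto)
      then show ?thesis using False by simp
    qed
    ultimately show ?thesis using False by simp
  qed
  then show ?thesis by blast
qed



lemma I01_nonneg:
  assumes "\<And>x. x \<in> {0..1} \<Longrightarrow> 0 \<le> f x"
  shows "0 \<le> I01 f"
  unfolding I01_def set_lebesgue_integral_def
  by (rule Bochner_Integration.integral_nonneg) (use assms in \<open>auto simp: indicator_def\<close>)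

lemma H10_int:
  assumes "H10 u u'"
  shows "set_integrable lborel {0..1} u'"
proof -
  have m: "(\<lambda>x. indicator {0..1} x *\<^sub>R u' x) \<in> borel_measurable lborel"
    using assms unfolding H10_def set_borel_measurable_def by blast
  have i2: "integrable lborel (\<lambda>x. indicator {0..1} x *\<^sub>R (u' x)\<^sup>2)"
    using assms unfolding H10_def set_integrable_def by blast
  have i1: "integrable lborel (\<lambda>x::real. indicator {0..1} x *\<^sub>R (1::real))"
    by (intro borel_integrable_compact) auto
  show ?thesis unfolding set_integrable_def
  proof (rule Bochner_Integration.integrable_bound[OF Bochner_Integration.integrable_add[OF i1 i2] m])
    show "AE x in lborel. norm (indicator {0..1} x *\<^sub>R u' x) \<le> norm (indicator {0..1} x *\<^sub>R (1::real) + indicator {0..1} x *\<^sub>R (u' x)\<^sup>2)"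
    proof (rule AE_I2)
      fix x
      have "\<bar>u' x\<bar> \<le> 1 + (u' x)\<^sup>2"
      proof -
        have "0 \<le> (\<bar>u' x\<bar> - 1/2) * (\<bar>u' x\<bar> - 1/2)" by simp
        then have "\<bar>u' x\<bar> \<le> \<bar>u' x\<bar> * \<bar>u' x\<bar> + 1/4" by (simp add: algebra_simps)
        then show ?thesis by (simp add: power2_eq_square abs_mult_self)
      qed
      then show "norm (indicator {0..1} x *\<^sub>R u' x) \<le> norm (indicator {0..1} x *\<^sub>R (1::real) + indicator {0..1} x *\<^sub>R (u' x)\<^sup>2)"
        by (auto simp: indicator_def)
    qed
  qed
qed

lemma H10_W11:
  assumes "H10 u u'"
  shows "W11_deriv u u'"
  using assms H10_int[OF assms] unfolding H10_def W11_deriv_def by auto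

lemma H10_bnd:
  assumes H: "H10 u u'" and st: "0 \<le> s" "s \<le> t" "t \<le> 1"
  shows "ennreal \<bar>u t - u s\<bar> \<le> (\<integral>\<^sup>+y. indicator {s..t} y * ennreal \<bar>u' y\<bar> \<partial>lborel)"
proof -
  have W: "W11_deriv u u'" by (rule H10_W11[OF H])
  have i: "integrable lborel (\<lambda>y. indicator {s..t} y *\<^sub>R u' y)"
    using W11_int[OF W st(1,3)] unfolding set_integrable_def .
  have "ennreal \<bar>u t - u s\<bar> = ennreal (norm (LINT y:{s..t}|lborel. u' y))"
    using W11_diff[OF W st] by simp
  also have "\<dots> \<le> (\<integral>\<^sup>+y. norm (indicator {s..t} y *\<^sub>R u' y) \<partial>lborel)"
    unfolding set_lebesgue_integral_def by (rule integral_norm_bound_ennreal[OF i])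
  also have "\<dots> = (\<integral>\<^sup>+y. indicator {s..t} y * ennreal \<bar>u' y\<bar> \<partial>lborel)"
    by (intro nn_integral_cong) (auto simp: indicator_def)
  finally show ?thesis .
qed

lemma H10_Vm:
  assumes "H10 u u'"
  shows "(\<lambda>y. indicator {0..1} y * u' y) \<in> borel_measurable borel"
  using assms unfolding H10_def set_borel_measurable_def by simp

lemma H10_B:
  assumes H: "H10 u u'"
  shows "(\<integral>\<^sup>+y. indicator {0..1} y * ennreal ((u' y)\<^sup>2) \<partial>lborel) = ennreal (I01 (\<lambda>x. (u' x)\<^sup>2))"
  unfolding I01_def by (rule set_nn_eq) (use H in \<open>auto simp: H10_def\<close>)

lemma hardy_u:
  assumes H: "H10 u u'" and x0: "0 < x0" "x0 < 1" and u0: "u x0 = 0"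
  shows "(\<integral>\<^sup>+x. indicator {0..1} x * ennreal ((u x)\<^sup>2 / (x-x0)\<^sup>2) \<partial>lborel) \<le> 8 * ennreal (I01 (\<lambda>x. (u' x)\<^sup>2))"
proof -
  define V where "V y = indicator {0..1} y * u' y" for y
  have Vm: "V \<in> borel_measurable borel" unfolding V_def by (rule H10_Vm[OF H])
  have uc: "continuous_on {0..1} u" by (rule W11_cont[OF H10_W11[OF H]])
  have Vabs: "(\<integral>\<^sup>+y. indicator {s..t} y * ennreal \<bar>u' y\<bar> \<partial>lborel) = (\<integral>\<^sup>+y. indicator {s..t} y * ennreal \<bar>V y\<bar> \<partial>lborel)"
    if "0 \<le> s" "t \<le> 1" for s t
    by (intro nn_integral_cong) (use that in \<open>auto simp: V_def indicator_def\<close>)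
  have Vsq: "(\<integral>\<^sup>+y. indicator {s..t} y * ennreal ((V y)\<^sup>2) \<partial>lborel) \<le> (\<integral>\<^sup>+y. indicator {0..1} y * ennreal ((u' y)\<^sup>2) \<partial>lborel)"
    if "0 \<le> s" "t \<le> 1" for s t
    by (intro nn_integral_mono) (use that in \<open>auto simp: V_def indicator_def\<close>)
  define F where "F x = ennreal ((u x)\<^sup>2 / (x-x0)\<^sup>2)" for x
  have meas: "(\<lambda>x. indicator S x * F x) \<in> borel_measurable borel" if "S \<subseteq> {0..1} - {x0}" "S \<in> sets borel" for S
  proof -
    have c: "continuous_on S (\<lambda>x. (u x)\<^sup>2 / (x-x0)\<^sup>2)"
      using that by (intro continuous_intros continuous_on_subset[OF uc]) auto
    have m: "(\<lambda>x. indicator S x *\<^sub>R ((u x)\<^sup>2 / (x-x0)\<^sup>2)) \<in> borel_measurable borel"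
      by (rule borel_measurable_continuous_on_indicator[OF that(2) c])
    have e: "(\<lambda>x. indicator S x * F x) = (\<lambda>x. ennreal (indicator S x *\<^sub>R ((u x)\<^sup>2 / (x-x0)\<^sup>2)))"
      by (auto simp: indicator_def F_def fun_eq_iff)
    show ?thesis unfolding e by (rule measurable_compose[OF m]) simp
  qed
  have R: "(\<integral>\<^sup>+x. indicator {x0<..1} x * F x \<partial>lborel) \<le> 4 * (\<integral>\<^sup>+y. indicator {x0..1} y * ennreal ((V y)\<^sup>2) \<partial>lborel)"
    unfolding F_def
  proof (rule hardy_right[OF x0(2) Vm])
    fix x assume x: "x0 < x" "x \<le> 1"
    show "ennreal \<bar>u x\<bar> \<le> (\<integral>\<^sup>+y. indicator {x0..x} y * ennreal \<bar>V y\<bar> \<partial>lborel)"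
      using H10_bnd[OF H, of x0 x] x x0 u0 Vabs[of x0 x] by simp
  qed
  have L: "(\<integral>\<^sup>+x. indicator {0..<x0} x * F x \<partial>lborel) \<le> 4 * (\<integral>\<^sup>+y. indicator {0..x0} y * ennreal ((V y)\<^sup>2) \<partial>lborel)"
    unfolding F_def
  proof (rule hardy_left[OF x0(1) Vm])
    show "(\<lambda>x. indicator {0..<x0} x * ennreal ((u x)\<^sup>2 / (x - x0)\<^sup>2)) \<in> borel_measurable borel"
      by (rule meas[of "{0..<x0}", unfolded F_def]) (use x0 in auto)
    fix x assume x: "0 \<le> x" "x < x0"
    show "ennreal \<bar>u x\<bar> \<le> (\<integral>\<^sup>+y. indicator {x..x0} y * ennreal \<bar>V y\<bar> \<partial>lborel)"
      using H10_bnd[OF H, of x x0] x x0 u0 Vabs[of x x0] by simp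
  qed
  have "(\<integral>\<^sup>+x. indicator {0..1} x * F x \<partial>lborel) \<le> (\<integral>\<^sup>+x. indicator {0..<x0} x * F x + indicator {x0<..1} x * F x \<partial>lborel)"
    by (intro nn_integral_mono) (auto simp: indicator_def F_def u0)
  also have "\<dots> = (\<integral>\<^sup>+x. indicator {0..<x0} x * F x \<partial>lborel) + (\<integral>\<^sup>+x. indicator {x0<..1} x * F x \<partial>lborel)"
  proof (rule nn_integral_add)
    show "(\<lambda>x. indicator {0..<x0} x * F x) \<in> borel_measurable lborel"
      using x0 by (auto intro!: meas)
    show "(\<lambda>x. indicator {x0<..1} x * F x) \<in> borel_measurable lborel"
      using x0 by (auto intro!: meas)
  qed
  also have "\<dots> \<le> 4 * (\<integral>\<^sup>+y. indicator {0..1} y * ennreal ((u' y)\<^sup>2) \<partial>lborel) + 4 * (\<integral>\<^sup>+y. indicator {0..1} y * ennreal ((u' y)\<^sup>2) \<partial>lborel)"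
  proof (rule add_mono)
    show "(\<integral>\<^sup>+x. indicator {0..<x0} x * F x \<partial>lborel) \<le> 4 * (\<integral>\<^sup>+y. indicator {0..1} y * ennreal ((u' y)\<^sup>2) \<partial>lborel)"
    proof -
      have "4 * (\<integral>\<^sup>+y. indicator {0..x0} y * ennreal ((V y)\<^sup>2) \<partial>lborel) \<le> 4 * (\<integral>\<^sup>+y. indicator {0..1} y * ennreal ((u' y)\<^sup>2) \<partial>lborel)"
        by (intro mult_left_mono Vsq) (use x0 in auto)
      then show ?thesis using L by (rule order_trans[rotated])
    qed
    show "(\<integral>\<^sup>+x. indicator {x0<..1} x * F x \<partial>lborel) \<le> 4 * (\<integral>\<^sup>+y. indicator {0..1} y * ennreal ((u' y)\<^sup>2) \<partial>lborel)"
    proof -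
      have "4 * (\<integral>\<^sup>+y. indicator {x0..1} y * ennreal ((V y)\<^sup>2) \<partial>lborel) \<le> 4 * (\<integral>\<^sup>+y. indicator {0..1} y * ennreal ((u' y)\<^sup>2) \<partial>lborel)"
        by (intro mult_left_mono Vsq) (use x0 in auto)
      then show ?thesis using R by (rule order_trans[rotated])
    qed
  qed
  also have "\<dots> = 8 * ennreal (I01 (\<lambda>x. (u' x)\<^sup>2))" unfolding H10_B[OF H]
    by (metis mult_2 distrib_right numeral_Bit0 numeral_times_numeral semiring_norm(12) semiring_norm(13))
  finally show ?thesis unfolding F_def .
qed



lemma sup_bound:
  assumes H: "H10 u u'" and x: "x \<in> {0..1}"
  shows "(u x)\<^sup>2 \<le> I01 (\<lambda>x. (u' x)\<^sup>2)"
proof -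
  define B where "B = I01 (\<lambda>x. (u' x)\<^sup>2)"
  have B0: "0 \<le> B" unfolding B_def by (rule I01_nonneg) simp
  have u0: "u 0 = 0" using H unfolding H10_def by blast
  have Vm: "(\<lambda>y. indicator {0..1} y * u' y) \<in> borel_measurable borel" by (rule H10_Vm[OF H])
  have m2: "(\<lambda>y. indicator {0..1} y * ennreal ((u' y)\<^sup>2)) \<in> borel_measurable lborel"
  proof -
    have "(\<lambda>y. ennreal ((indicator {0..1} y * u' y)\<^sup>2)) \<in> borel_measurable borel" using Vm by measurable
    moreover have "(\<lambda>y. indicator {0..1} y * ennreal ((u' y)\<^sup>2)) = (\<lambda>y. ennreal ((indicator {0..1} y * u' y)\<^sup>2))"
      by (auto simp: indicator_def fun_eq_iff)
    ultimately show ?thesis by simp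
  qed
  have main: "\<bar>u x\<bar> \<le> (l * B + 1 / l) / 2" if l: "l > 0" for l
  proof -
    have "ennreal \<bar>u x\<bar> = ennreal \<bar>u x - u 0\<bar>" using u0 by simp
    also have "\<dots> \<le> (\<integral>\<^sup>+y. indicator {0..x} y * ennreal \<bar>u' y\<bar> \<partial>lborel)"
      by (rule H10_bnd[OF H]) (use x in auto)
    also have "\<dots> \<le> (\<integral>\<^sup>+y. ennreal (l/2) * (indicator {0..1} y * ennreal ((u' y)\<^sup>2)) + ennreal (1/(2*l)) * indicator {0..1} y \<partial>lborel)"
    proof (rule nn_integral_mono)
      fix y
      show "indicator {0..x} y * ennreal \<bar>u' y\<bar> \<le> ennreal (l/2) * (indicator {0..1} y * ennreal ((u' y)\<^sup>2)) + ennreal (1/(2*l)) * indicator {0..1} y"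
      proof (cases "y \<in> {0..1}")
        case True
        have r: "\<bar>u' y\<bar> \<le> l/2 * (u' y)\<^sup>2 + 1/(2*l)"
          using amgm_pt[OF l, of "u' y"] by (simp add: add_divide_distrib)
        have "indicator {0..x} y * ennreal \<bar>u' y\<bar> \<le> ennreal \<bar>u' y\<bar>" by (auto simp: indicator_def)
        also have "\<dots> \<le> ennreal (l/2 * (u' y)\<^sup>2 + 1/(2*l))" using r by (rule ennreal_leI)
        also have "\<dots> = ennreal (l/2) * ennreal ((u' y)\<^sup>2) + ennreal (1/(2*l))"
          using l by (subst ennreal_plus) (auto simp: ennreal_mult[symmetric])
        finally show ?thesis using True by simp
      next
        case False
        then show ?thesis using x by (auto simp: indicator_def)
      qed
    qed
    also have "\<dots> = ennreal (l/2) * ennreal B + ennreal (1/(2*l)) * 1"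
      using m2 by (subst nn_integral_add) (auto simp: nn_integral_cmult H10_B[OF H] B_def)
    also have "\<dots> = ennreal ((l * B + 1 / l) / 2)"
    proof -
      have a: "ennreal (l/2) * ennreal B = ennreal (l/2*B)" by (rule ennreal_mult[symmetric]) (use l B0 in auto)
      have c: "ennreal (l/2*B) + ennreal (1/(2*l)) = ennreal (l/2*B + 1/(2*l))"
        by (rule ennreal_plus[symmetric]) (use l B0 in auto)
      have d: "l/2*B + 1/(2*l) = (l * B + 1 / l) / 2" by (simp add: field_simps)
      show ?thesis unfolding a mult_1_right c d ..
    qed
    finally show ?thesis using l B0 by (subst (asm) ennreal_le_iff) auto
  qed
  have "(\<bar>u x\<bar>)\<^sup>2 \<le> B * 1" by (rule amgm_sq) (use main B0 in auto)
  then show ?thesis unfolding B_def by simp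
qed

lemma powr_int_bound:
  fixes x0 \<gamma> :: real
  assumes x0: "0 < x0" "x0 < 1" and g: "0 \<le> \<gamma>" "\<gamma> < 1"
  shows "(\<integral>\<^sup>+x. indicator {0..1} x * ennreal (\<bar>x - x0\<bar> powr (-\<gamma>)) \<partial>lborel)
    \<le> ennreal (x0 powr (1-\<gamma>) / (1-\<gamma>) + (1-x0) powr (1-\<gamma>) / (1-\<gamma>))"
proof -
  have "(\<integral>\<^sup>+x. indicator {0..1} x * ennreal (\<bar>x - x0\<bar> powr (-\<gamma>)) \<partial>lborel)
    \<le> (\<integral>\<^sup>+x. indicator {0..x0} x * ennreal (\<bar>x - x0\<bar> powr (-\<gamma>)) + indicator {x0..1} x * ennreal (\<bar>x - x0\<bar> powr (-\<gamma>)) \<partial>lborel)"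
    by (intro nn_integral_mono) (auto simp: indicator_def)
  also have "\<dots> = (\<integral>\<^sup>+x. indicator {0..x0} x * ennreal (\<bar>x - x0\<bar> powr (-\<gamma>)) \<partial>lborel)
      + (\<integral>\<^sup>+x. indicator {x0..1} x * ennreal (\<bar>x - x0\<bar> powr (-\<gamma>)) \<partial>lborel)"
    by (rule nn_integral_add) auto
  also have "(\<integral>\<^sup>+x. indicator {x0..1} x * ennreal (\<bar>x - x0\<bar> powr (-\<gamma>)) \<partial>lborel)
      = (\<integral>\<^sup>+x. indicator {x0..1} x * ennreal ((x - x0) powr (-\<gamma>)) \<partial>lborel)"
    by (intro nn_integral_cong) (auto simp: indicator_def)
  also have "\<dots> = ennreal ((1-x0) powr (1-\<gamma>) / (1-\<gamma>))"
    using nn_powr_shift[of "-\<gamma>" x0 1] g x0 by simp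
  also have "(\<integral>\<^sup>+x. indicator {0..x0} x * ennreal (\<bar>x - x0\<bar> powr (-\<gamma>)) \<partial>lborel)
      = (\<integral>\<^sup>+x. indicator {0..x0} (-x) * ennreal (\<bar>-x - x0\<bar> powr (-\<gamma>)) \<partial>lborel)"
    by (rule nn_reflect) measurable
  also have "\<dots> = (\<integral>\<^sup>+x. indicator {-x0..0} x * ennreal ((x - (-x0)) powr (-\<gamma>)) \<partial>lborel)"
    by (intro nn_integral_cong) (auto simp: indicator_def add.commute)
  also have "\<dots> = ennreal (x0 powr (1-\<gamma>) / (1-\<gamma>))"
    using nn_powr_shift[of "-\<gamma>" "-x0" 0] g x0 by simp
  finally show ?thesis using g by (simp add: ennreal_plus[symmetric] del: ennreal_plus)
qed

lemma deg_props:
  assumes "weak_deg x0 f K \<or> strong_deg x0 f K"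
  shows "0 < K \<and> (\<exists>g. W11_deriv f g \<and> (AE x in lborel. x \<in> {0..1} \<longrightarrow> (x - x0) * g x \<le> K * f x))"
  using assms unfolding weak_deg_def strong_deg_def W1inf_deriv_def by auto

lemma deg_lower2:
  assumes d: "weak_deg x0 f K \<or> strong_deg x0 f K" and x0: "0 < x0" "x0 < 1"
    and pos: "f 0 > 0" "f 1 > 0" "f x0 \<ge> 0"
  shows "\<exists>c>0. \<forall>x\<in>{0..1}. c * \<bar>x - x0\<bar> powr K \<le> f x"
  using deg_props[OF d] deg_lower[OF _ _ x0 _ pos] by blast



lemma ptw:
  fixes N W c P :: real
  assumes "0 \<le> N" "0 < c" "0 < P" "c * P \<le> W"
  shows "N / W \<le> N / c * (1 / P)"
proof -
  have cp: "0 < c * P" using assms by simp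
  then have "0 < W" using assms by linarith
  have "N / W \<le> N / (c * P)" using assms cp \<open>0 < W\<close> by (intro divide_left_mono) auto
  then show ?thesis by simp
qed

lemma key_H1:
  fixes x0 K1 K2 :: real and a b :: "real \<Rightarrow> real"
  assumes x0: "0 < x0" "x0 < 1" and a0: "a x0 = 0"
    and pos: "\<And>x. x \<in> {0..1} \<Longrightarrow> x \<noteq> x0 \<Longrightarrow> 0 < a x \<and> 0 < b x"
    and ca: "ca > 0" "\<And>x. x \<in> {0..1} \<Longrightarrow> ca * \<bar>x-x0\<bar> powr K1 \<le> a x"
    and cb: "cb > 0" "\<And>x. x \<in> {0..1} \<Longrightarrow> cb * \<bar>x-x0\<bar> powr K2 \<le> b x"
    and g: "0 < K1" "0 < K2" "K1 + K2 < 1"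
  shows "\<exists>C0\<ge>0. \<exists>M\<ge>1. \<forall>u u'. Ka_mem a u u' \<longrightarrow>
     I01 (\<lambda>x. (u x)\<^sup>2 / (a x * b x)) \<le> C0 * I01 (\<lambda>x. (u' x)\<^sup>2) \<and>
     I01 (\<lambda>x. (u x)\<^sup>2 / a x) + I01 (\<lambda>x. (u' x)\<^sup>2) \<le> M * I01 (\<lambda>x. (u' x)\<^sup>2)"
proof -
  define J where "J = x0 powr (1-(K1+K2)) / (1-(K1+K2)) + (1-x0) powr (1-(K1+K2)) / (1-(K1+K2))"
  define J1 where "J1 = x0 powr (1-K1) / (1-K1) + (1-x0) powr (1-K1) / (1-K1)"
  have J0: "0 \<le> J" "0 \<le> J1" unfolding J_def J1_def using g by auto
  have Jb: "(\<integral>\<^sup>+x. indicator {0..1} x * ennreal (\<bar>x - x0\<bar> powr (-(K1+K2))) \<partial>lborel) \<le> ennreal J"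
    unfolding J_def by (rule powr_int_bound) (use x0 g in auto)
  have J1b: "(\<integral>\<^sup>+x. indicator {0..1} x * ennreal (\<bar>x - x0\<bar> powr (-K1)) \<partial>lborel) \<le> ennreal J1"
    unfolding J1_def by (rule powr_int_bound) (use x0 g in auto)
  have ann: "0 \<le> a x" "0 \<le> b x" if "x \<in> {0..1}" for x
  proof -
    have "0 \<le> ca * \<bar>x-x0\<bar> powr K1" "0 \<le> cb * \<bar>x-x0\<bar> powr K2" using ca(1) cb(1) by auto
    then show "0 \<le> a x" "0 \<le> b x" using ca(2)[OF that] cb(2)[OF that] by linarith+
  qed
  have gen: "(\<integral>\<^sup>+x. indicator {0..1} x * ennreal ((u x)\<^sup>2 / W x) \<partial>lborel) \<le> ennreal (B / c * JJ)"
    if B: "0 \<le> B" "\<And>x. x \<in> {0..1} \<Longrightarrow> (u x)\<^sup>2 \<le> B" and c: "c > 0"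
      and W: "\<And>x. x \<in> {0..1} \<Longrightarrow> x \<noteq> x0 \<Longrightarrow> c * \<bar>x-x0\<bar> powr \<gamma> \<le> W x" "W x0 = 0"
      and JJ: "(\<integral>\<^sup>+x. indicator {0..1} x * ennreal (\<bar>x - x0\<bar> powr (-\<gamma>)) \<partial>lborel) \<le> ennreal JJ" "0 \<le> JJ"
    for u W B c \<gamma> JJ
  proof -
    have "(\<integral>\<^sup>+x. indicator {0..1} x * ennreal ((u x)\<^sup>2 / W x) \<partial>lborel)
        \<le> (\<integral>\<^sup>+x. ennreal (B / c) * (indicator {0..1} x * ennreal (\<bar>x - x0\<bar> powr (-\<gamma>))) \<partial>lborel)"
    proof (rule nn_integral_mono)
      fix x
      show "indicator {0..1} x * ennreal ((u x)\<^sup>2 / W x) \<le> ennreal (B / c) * (indicator {0..1} x * ennreal (\<bar>x - x0\<bar> powr (-\<gamma>)))"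
      proof (cases "x \<in> {0..1} \<and> x \<noteq> x0")
        case True
        have dp: "0 < \<bar>x - x0\<bar> powr \<gamma>" using True by simp
        have "(u x)\<^sup>2 / W x \<le> (u x)\<^sup>2 / c * (1 / \<bar>x - x0\<bar> powr \<gamma>)"
          by (rule ptw) (use True c dp W(1) in auto)
        also have "\<dots> \<le> B / c * (1 / \<bar>x - x0\<bar> powr \<gamma>)"
          using B(2)[of x] True c dp by (intro mult_right_mono divide_right_mono) auto
        also have "1 / \<bar>x - x0\<bar> powr \<gamma> = \<bar>x - x0\<bar> powr (-\<gamma>)" by (simp add: powr_minus_divide)
        finally have r: "(u x)\<^sup>2 / W x \<le> B / c * \<bar>x - x0\<bar> powr (-\<gamma>)" .
        have "ennreal ((u x)\<^sup>2 / W x) \<le> ennreal (B / c * \<bar>x - x0\<bar> powr (-\<gamma>))" using r by (rule ennreal_leI)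
        also have "\<dots> = ennreal (B / c) * ennreal (\<bar>x - x0\<bar> powr (-\<gamma>))" using B c by (intro ennreal_mult) auto
        finally show ?thesis using True by simp
      next
        case False
        then show ?thesis using W(2) by (auto simp: indicator_def)
      qed
    qed
    also have "\<dots> = ennreal (B / c) * (\<integral>\<^sup>+x. indicator {0..1} x * ennreal (\<bar>x - x0\<bar> powr (-\<gamma>)) \<partial>lborel)"
      by (rule nn_integral_cmult) measurable
    also have "\<dots> \<le> ennreal (B / c) * ennreal JJ" by (rule mult_left_mono[OF JJ(1)]) simp
    also have "\<dots> = ennreal (B / c * JJ)" using B c JJ by (intro ennreal_mult[symmetric]) auto
    finally show ?thesis .
  qed
  show ?thesis
  proof (intro exI conjI allI impI)
    show "0 \<le> J / (ca * cb)" using J0 ca cb by simp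
    show "1 \<le> 1 + J1 / ca" using J0 ca by simp
    fix u u' assume Ka: "Ka_mem a u u'"
    have Hu: "H10 u u'" using Ka unfolding Ka_mem_def by simp
    define B where "B = I01 (\<lambda>x. (u' x)\<^sup>2)"
    have B0: "0 \<le> B" unfolding B_def by (rule I01_nonneg) simp
    have sup: "\<And>x. x \<in> {0..1} \<Longrightarrow> (u x)\<^sup>2 \<le> B" unfolding B_def by (rule sup_bound[OF Hu])
    have A: "I01 (\<lambda>x. (u x)\<^sup>2 / (a x * b x)) \<le> B / (ca * cb) * J"
      unfolding I01_def
    proof (rule set_integral_le_nn)
      show "0 \<le> B / (ca * cb) * J" using B0 ca cb J0 by simp
      show "\<And>x. x \<in> {0..1} \<Longrightarrow> 0 \<le> (u x)\<^sup>2 / (a x * b x)" using ann by simp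
      show "(\<integral>\<^sup>+x. indicator {0..1} x * ennreal ((u x)\<^sup>2 / (a x * b x)) \<partial>lborel) \<le> ennreal (B / (ca * cb) * J)"
      proof (rule gen[OF B0 sup _ _ _ Jb J0(1)])
        show "0 < ca * cb" using ca cb by simp
        show "a x0 * b x0 = 0" using a0 by simp
        fix x assume x: "x \<in> {0..1}" "x \<noteq> x0"
        have "ca * cb * \<bar>x - x0\<bar> powr (K1 + K2) = (ca * \<bar>x-x0\<bar> powr K1) * (cb * \<bar>x-x0\<bar> powr K2)"
          by (simp add: powr_add)
        also have "\<dots> \<le> a x * b x"
          using ca cb x by (intro mult_mono ca(2) cb(2)) (auto intro: ann)
        finally show "ca * cb * \<bar>x - x0\<bar> powr (K1 + K2) \<le> a x * b x" .
      qed
    qed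
    have Na: "I01 (\<lambda>x. (u x)\<^sup>2 / a x) \<le> B / ca * J1"
      unfolding I01_def
    proof (rule set_integral_le_nn)
      show "0 \<le> B / ca * J1" using B0 ca J0 by simp
      show "\<And>x. x \<in> {0..1} \<Longrightarrow> 0 \<le> (u x)\<^sup>2 / a x" using ann by simp
      show "(\<integral>\<^sup>+x. indicator {0..1} x * ennreal ((u x)\<^sup>2 / a x) \<partial>lborel) \<le> ennreal (B / ca * J1)"
        by (rule gen[where W=a and \<gamma>=K1, OF B0 sup ca(1) _ a0 J1b J0(2)]) (use ca in auto)
    qed
    show "I01 (\<lambda>x. (u x)\<^sup>2 / (a x * b x)) \<le> J / (ca * cb) * I01 (\<lambda>x. (u' x)\<^sup>2)"
      using A unfolding B_def by (simp add: field_simps)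
    show "I01 (\<lambda>x. (u x)\<^sup>2 / a x) + I01 (\<lambda>x. (u' x)\<^sup>2) \<le> (1 + J1 / ca) * I01 (\<lambda>x. (u' x)\<^sup>2)"
      using Na unfolding B_def by (simp add: field_simps)
  qed
qed

lemma key_nH1:
  fixes x0 K1 K2 C Mb ca cb :: real and a b :: "real \<Rightarrow> real"
  assumes x0: "0 < x0" "x0 < 1" and a0: "a x0 = 0" and b0: "b x0 = 0"
    and pos: "\<And>x. x \<in> {0..1} \<Longrightarrow> x \<noteq> x0 \<Longrightarrow> 0 < a x \<and> 0 < b x"
    and ca: "ca > 0" "\<And>x. x \<in> {0..1} \<Longrightarrow> ca * \<bar>x-x0\<bar> powr K1 \<le> a x"
    and cb: "cb > 0" "\<And>x. x \<in> {0..1} \<Longrightarrow> cb * \<bar>x-x0\<bar> powr K2 \<le> b x"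
    and g: "K1 + K2 \<le> 2"
    and up: "C > 0" "\<And>x. x \<in> {0..1} \<Longrightarrow> a x * b x \<le> C * \<bar>x - x0\<bar>"
    and Mb: "0 \<le> Mb" "\<And>x. x \<in> {0..1} \<Longrightarrow> b x \<le> Mb"
  shows "\<exists>C0\<ge>0. \<exists>M\<ge>1. \<forall>u u'. Kab_mem a b u u' \<longrightarrow>
     I01 (\<lambda>x. (u x)\<^sup>2 / (a x * b x)) \<le> C0 * I01 (\<lambda>x. (u' x)\<^sup>2) \<and>
     I01 (\<lambda>x. (u x)\<^sup>2 / a x) + I01 (\<lambda>x. (u' x)\<^sup>2) + I01 (\<lambda>x. (u x)\<^sup>2 / (a x * b x))
       \<le> M * I01 (\<lambda>x. (u' x)\<^sup>2)"
proof -
  have ann: "0 \<le> a x" "0 \<le> b x" if "x \<in> {0..1}" for x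
  proof -
    have "0 \<le> ca * \<bar>x-x0\<bar> powr K1" "0 \<le> cb * \<bar>x-x0\<bar> powr K2" using ca(1) cb(1) by auto
    then show "0 \<le> a x" "0 \<le> b x" using ca(2)[OF that] cb(2)[OF that] by linarith+
  qed
  have ablow: "ca * cb * (x - x0)\<^sup>2 \<le> a x * b x" if x: "x \<in> {0..1}" for x
  proof -
    have d1: "\<bar>x - x0\<bar> \<le> 1" using x x0 by auto
    have "(x - x0)\<^sup>2 = \<bar>x - x0\<bar> powr 2" by simp
    also have "\<dots> \<le> \<bar>x - x0\<bar> powr (K1 + K2)" by (rule powr_mono') (use g d1 in auto)
    finally have "ca * cb * (x - x0)\<^sup>2 \<le> ca * cb * \<bar>x - x0\<bar> powr (K1 + K2)" using ca cb by simp
    also have "\<dots> = (ca * \<bar>x-x0\<bar> powr K1) * (cb * \<bar>x-x0\<bar> powr K2)"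
      by (simp add: powr_add)
    also have "\<dots> \<le> a x * b x"
      using ca cb x by (intro mult_mono ca(2) cb(2)) (auto intro: ann)
    finally show ?thesis .
  qed
  define C0 where "C0 = 8 / (ca * cb)"
  have C00: "0 \<le> C0" unfolding C0_def using ca cb by simp
  show ?thesis
  proof (intro exI conjI allI impI)
    show "0 \<le> C0" by (rule C00)
    show "1 \<le> 1 + C0 + Mb * C0" using C00 Mb by simp
    fix u u' assume Kab: "Kab_mem a b u u'"
    have Ka: "Ka_mem a u u'" and intA: "set_integrable lborel {0..1} (\<lambda>x. (u x)\<^sup>2 / (a x * b x))"
      using Kab unfolding Kab_mem_def by auto
    have Hu: "H10 u u'" using Ka unfolding Ka_mem_def by simp
    define B where "B = I01 (\<lambda>x. (u' x)\<^sup>2)"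
    define A where "A = I01 (\<lambda>x. (u x)\<^sup>2 / (a x * b x))"
    have B0: "0 \<le> B" unfolding B_def by (rule I01_nonneg) simp
    have A0: "0 \<le> A" unfolding A_def by (rule I01_nonneg) (simp add: ann)
    have uc: "continuous_on {0..1} u" by (rule W11_cont[OF H10_W11[OF Hu]])
    have u0: "u x0 = 0"
    proof (rule u_x0_zero[OF uc x0 up(1)])
      show "\<And>x. x \<in> {0..1} \<Longrightarrow> 0 \<le> a x * b x" using ann by simp
      show "\<And>x. x \<in> {0..1} \<Longrightarrow> x \<noteq> x0 \<Longrightarrow> 0 < a x * b x" using pos by simp
      show "\<And>x. x \<in> {0..1} \<Longrightarrow> a x * b x \<le> C * \<bar>x - x0\<bar>" by (rule up(2))
      show "set_integrable lborel {0..1} (\<lambda>x. (u x)\<^sup>2 / (a x * b x))" by (rule intA)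
    qed
    have hardy: "(\<integral>\<^sup>+x. indicator {0..1} x * ennreal ((u x)\<^sup>2 / (x-x0)\<^sup>2) \<partial>lborel) \<le> 8 * ennreal B"
      unfolding B_def by (rule hardy_u[OF Hu x0 u0])
    have measH: "(\<lambda>x. indicator {0..1} x * ennreal ((u x)\<^sup>2 / (x-x0)\<^sup>2)) \<in> borel_measurable borel"
    proof -
      have c: "continuous_on ({0..1} - {x0}) (\<lambda>x. (u x)\<^sup>2 / (x-x0)\<^sup>2)"
        by (intro continuous_intros continuous_on_subset[OF uc]) auto
      have m: "(\<lambda>x. indicator ({0..1} - {x0}) x *\<^sub>R ((u x)\<^sup>2 / (x-x0)\<^sup>2)) \<in> borel_measurable borel"
        by (rule borel_measurable_continuous_on_indicator[OF _ c]) auto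
      have e: "(\<lambda>x. indicator {0..1} x * ennreal ((u x)\<^sup>2 / (x-x0)\<^sup>2)) = (\<lambda>x. ennreal (indicator ({0..1} - {x0}) x *\<^sub>R ((u x)\<^sup>2 / (x-x0)\<^sup>2)))"
        by (auto simp: indicator_def fun_eq_iff u0)
      show ?thesis unfolding e by (rule measurable_compose[OF m]) simp
    qed
    have measA: "(\<lambda>x. indicator {0..1} x * ennreal ((u x)\<^sup>2 / (a x * b x))) \<in> borel_measurable borel"
    proof -
      have m: "(\<lambda>x. indicator {0..1} x *\<^sub>R ((u x)\<^sup>2 / (a x * b x))) \<in> borel_measurable borel"
        using borel_measurable_integrable[OF intA[unfolded set_integrable_def]] by simp
      have e: "(\<lambda>x. indicator {0..1} x * ennreal ((u x)\<^sup>2 / (a x * b x))) = (\<lambda>x. ennreal (indicator {0..1} x *\<^sub>R ((u x)\<^sup>2 / (a x * b x))))"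
        by (auto simp: indicator_def fun_eq_iff)
      show ?thesis unfolding e by (rule measurable_compose[OF m]) simp
    qed
    have AB: "A \<le> C0 * B" unfolding A_def I01_def
    proof (rule set_integral_le_nn)
      show "0 \<le> C0 * B" using C00 B0 by simp
      show "\<And>x. x \<in> {0..1} \<Longrightarrow> 0 \<le> (u x)\<^sup>2 / (a x * b x)" using ann by simp
      have "(\<integral>\<^sup>+x. indicator {0..1} x * ennreal ((u x)\<^sup>2 / (a x * b x)) \<partial>lborel)
          \<le> (\<integral>\<^sup>+x. ennreal (1 / (ca * cb)) * (indicator {0..1} x * ennreal ((u x)\<^sup>2 / (x-x0)\<^sup>2)) \<partial>lborel)"
      proof (rule nn_integral_mono)
        fix x
        show "indicator {0..1} x * ennreal ((u x)\<^sup>2 / (a x * b x)) \<le> ennreal (1 / (ca * cb)) * (indicator {0..1} x * ennreal ((u x)\<^sup>2 / (x-x0)\<^sup>2))"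
        proof (cases "x \<in> {0..1} \<and> x \<noteq> x0")
          case True
          have dp: "0 < (x - x0)\<^sup>2" using True by simp
          have "(u x)\<^sup>2 / (a x * b x) \<le> (u x)\<^sup>2 / (ca * cb) * (1 / (x - x0)\<^sup>2)"
            by (rule ptw) (use True ca cb dp ablow in auto)
          also have "\<dots> = 1 / (ca * cb) * ((u x)\<^sup>2 / (x - x0)\<^sup>2)" by simp
          finally have r: "(u x)\<^sup>2 / (a x * b x) \<le> 1 / (ca * cb) * ((u x)\<^sup>2 / (x - x0)\<^sup>2)" .
          have "ennreal ((u x)\<^sup>2 / (a x * b x)) \<le> ennreal (1 / (ca * cb) * ((u x)\<^sup>2 / (x - x0)\<^sup>2))"
            using r by (rule ennreal_leI)
          also have "\<dots> = ennreal (1 / (ca * cb)) * ennreal ((u x)\<^sup>2 / (x - x0)\<^sup>2)"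
            using ca cb by (intro ennreal_mult) auto
          finally show ?thesis using True by simp
        next
          case False
          then show ?thesis using a0 by (auto simp: indicator_def)
        qed
      qed
      also have "\<dots> = ennreal (1 / (ca * cb)) * (\<integral>\<^sup>+x. indicator {0..1} x * ennreal ((u x)\<^sup>2 / (x-x0)\<^sup>2) \<partial>lborel)"
        by (rule nn_integral_cmult) (use measH in simp)
      also have "\<dots> \<le> ennreal (1 / (ca * cb)) * (8 * ennreal B)" by (rule mult_left_mono[OF hardy]) simp
      also have "\<dots> = ennreal (C0 * B)"
      proof -
        have "ennreal (1 / (ca * cb)) * (8 * ennreal B) = ennreal (1 / (ca * cb)) * ennreal (8 * B)"
          using ennreal_mult[of 8 B] B0 by simp
        also have "\<dots> = ennreal (1 / (ca * cb) * (8 * B))" using ca cb B0 by (intro ennreal_mult[symmetric]) auto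
        also have "1 / (ca * cb) * (8 * B) = C0 * B" unfolding C0_def by simp
        finally show ?thesis .
      qed
      finally show "(\<integral>\<^sup>+x. indicator {0..1} x * ennreal ((u x)\<^sup>2 / (a x * b x)) \<partial>lborel) \<le> ennreal (C0 * B)" .
    qed
    have NA: "I01 (\<lambda>x. (u x)\<^sup>2 / a x) \<le> Mb * A" unfolding I01_def
    proof (rule set_integral_le_nn)
      show "0 \<le> Mb * A" using Mb A0 by simp
      show "\<And>x. x \<in> {0..1} \<Longrightarrow> 0 \<le> (u x)\<^sup>2 / a x" using ann by simp
      have "(\<integral>\<^sup>+x. indicator {0..1} x * ennreal ((u x)\<^sup>2 / a x) \<partial>lborel)
          \<le> (\<integral>\<^sup>+x. ennreal Mb * (indicator {0..1} x * ennreal ((u x)\<^sup>2 / (a x * b x))) \<partial>lborel)"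
      proof (rule nn_integral_mono)
        fix x
        show "indicator {0..1} x * ennreal ((u x)\<^sup>2 / a x) \<le> ennreal Mb * (indicator {0..1} x * ennreal ((u x)\<^sup>2 / (a x * b x)))"
        proof (cases "x \<in> {0..1} \<and> x \<noteq> x0")
          case True
          have p: "0 < a x" "0 < b x" using pos True by auto
          have "(u x)\<^sup>2 / a x = b x * ((u x)\<^sup>2 / (a x * b x))" using p by simp
          also have "\<dots> \<le> Mb * ((u x)\<^sup>2 / (a x * b x))"
            using Mb(2)[of x] True p by (intro mult_right_mono) auto
          finally have r: "(u x)\<^sup>2 / a x \<le> Mb * ((u x)\<^sup>2 / (a x * b x))" .
          have "ennreal ((u x)\<^sup>2 / a x) \<le> ennreal (Mb * ((u x)\<^sup>2 / (a x * b x)))" using r by (rule ennreal_leI)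
          also have "\<dots> = ennreal Mb * ennreal ((u x)\<^sup>2 / (a x * b x))" using Mb p by (intro ennreal_mult) auto
          finally show ?thesis using True by simp
        next
          case False
          then show ?thesis using a0 by (auto simp: indicator_def)
        qed
      qed
      also have "\<dots> = ennreal Mb * (\<integral>\<^sup>+x. indicator {0..1} x * ennreal ((u x)\<^sup>2 / (a x * b x)) \<partial>lborel)"
        by (rule nn_integral_cmult) (use measA in simp)
      also have "\<dots> = ennreal Mb * ennreal A"
        unfolding A_def I01_def by (subst set_nn_eq[OF intA]) (auto simp: ann)
      also have "\<dots> = ennreal (Mb * A)" using Mb A0 by (intro ennreal_mult[symmetric]) auto
      finally show "(\<integral>\<^sup>+x. indicator {0..1} x * ennreal ((u x)\<^sup>2 / a x) \<partial>lborel) \<le> ennreal (Mb * A)" .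
    qed
    show "I01 (\<lambda>x. (u x)\<^sup>2 / (a x * b x)) \<le> C0 * I01 (\<lambda>x. (u' x)\<^sup>2)"
      using AB unfolding A_def B_def .
    have "Mb * A \<le> Mb * (C0 * B)" using AB Mb by (intro mult_left_mono) auto
    then show "I01 (\<lambda>x. (u x)\<^sup>2 / a x) + I01 (\<lambda>x. (u' x)\<^sup>2) + I01 (\<lambda>x. (u x)\<^sup>2 / (a x * b x))
       \<le> (1 + C0 + Mb * C0) * I01 (\<lambda>x. (u' x)\<^sup>2)"
      using NA AB unfolding A_def[symmetric] B_def[symmetric] by (simp add: algebra_simps)
  qed
qed



lemma key_all:
  fixes x0 K1 K2 :: real and a b :: "real \<Rightarrow> real"
  assumes x0: "0 < x0" "x0 < 1" and ab: "basic_ab x0 a b" and H: "condH x0 a b K1 K2"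
  shows "\<exists>C0\<ge>0. \<exists>M\<ge>1. \<forall>u u'. K_mem x0 a b K1 K2 u u' \<longrightarrow>
     I01 (\<lambda>x. (u x)\<^sup>2 / (a x * b x)) \<le> C0 * I01 (\<lambda>x. (u' x)\<^sup>2) \<and>
     K_normsq x0 a b K1 K2 u u' \<le> M * I01 (\<lambda>x. (u' x)\<^sup>2)"
proof -
  have a0: "a x0 = 0" "b x0 = 0" and pos: "\<And>x. x \<in> {0..1} \<Longrightarrow> x \<noteq> x0 \<Longrightarrow> 0 < a x \<and> 0 < b x"
    using ab unfolding basic_ab_def by auto
  have da: "weak_deg x0 a K1 \<or> strong_deg x0 a K1" and db: "weak_deg x0 b K2 \<or> strong_deg x0 b K2"
    using H unfolding condH_def H1_def H2_def H3_def H4_def by auto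
  have p0: "0 < a 0" "0 < b 0" "0 < a 1" "0 < b 1" using pos[of 0] pos[of 1] x0 by auto
  obtain ca where ca: "ca > 0" "\<And>x. x \<in> {0..1} \<Longrightarrow> ca * \<bar>x-x0\<bar> powr K1 \<le> a x"
    using deg_lower2[OF da x0] p0 a0 by auto
  obtain cb where cb: "cb > 0" "\<And>x. x \<in> {0..1} \<Longrightarrow> cb * \<bar>x-x0\<bar> powr K2 \<le> b x"
    using deg_lower2[OF db x0] p0 a0 by auto
  have Kp: "0 < K1" "0 < K2" using deg_props[OF da] deg_props[OF db] by auto
  have ann: "0 \<le> a x" "0 \<le> b x" if "x \<in> {0..1}" for x
  proof -
    have "0 \<le> ca * \<bar>x-x0\<bar> powr K1" "0 \<le> cb * \<bar>x-x0\<bar> powr K2" using ca(1) cb(1) by auto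
    then show "0 \<le> a x" "0 \<le> b x" using ca(2)[OF that] cb(2)[OF that] by linarith+
  qed
  show ?thesis
  proof (cases "H1 x0 a b K1 K2")
    case True
    have g: "K1 + K2 < 1" using True unfolding H1_def by auto
    obtain C0 M where CM: "C0 \<ge> 0" "M \<ge> 1" and k: "\<forall>u u'. Ka_mem a u u' \<longrightarrow>
     I01 (\<lambda>x. (u x)\<^sup>2 / (a x * b x)) \<le> C0 * I01 (\<lambda>x. (u' x)\<^sup>2) \<and>
     I01 (\<lambda>x. (u x)\<^sup>2 / a x) + I01 (\<lambda>x. (u' x)\<^sup>2) \<le> M * I01 (\<lambda>x. (u' x)\<^sup>2)"
      using key_H1[OF x0 a0(1) pos ca cb Kp g] by blast
    show ?thesis using CM k True unfolding K_mem_def K_normsq_def by auto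
  next
    case False
    have nH: "H2 x0 a b K1 K2 \<or> H3 x0 a b K1 K2 \<or> H4 x0 a b K1 K2" using H False unfolding condH_def by auto
    have g: "K1 + K2 \<le> 2" "1 \<le> K1 + K2"
      using nH Kp unfolding H2_def H3_def H4_def strong_deg_def by auto
    have up: "\<exists>C>0. \<forall>x\<in>{0..1}. a x * b x \<le> C * \<bar>x - x0\<bar>"
    proof (cases "growth x0 a b K1 K2")
      case True
      then obtain c1 c2 where c: "c1 > 0" "c2 > 0"
        and cc: "\<And>x. x \<in> {0..1} \<Longrightarrow> \<bar>x - x0\<bar> powr K1 \<ge> c1 * a x \<and> \<bar>x - x0\<bar> powr K2 \<ge> c2 * b x"
        unfolding growth_def by blast
      have "a x * b x \<le> 1 / (c1 * c2) * \<bar>x - x0\<bar>" if x: "x \<in> {0..1}" for x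
      proof -
        have d1: "\<bar>x - x0\<bar> \<le> 1" using x x0 by auto
        have "a x \<le> \<bar>x - x0\<bar> powr K1 / c1" "b x \<le> \<bar>x - x0\<bar> powr K2 / c2"
          using cc[OF x] c by (auto simp: pos_le_divide_eq mult.commute)
        then have "a x * b x \<le> (\<bar>x - x0\<bar> powr K1 / c1) * (\<bar>x - x0\<bar> powr K2 / c2)"
          using ann[OF x] c by (intro mult_mono) auto
        also have "\<dots> = 1 / (c1 * c2) * \<bar>x - x0\<bar> powr (K1 + K2)" by (simp add: powr_add)
        also have "\<bar>x - x0\<bar> powr (K1 + K2) \<le> \<bar>x - x0\<bar> powr 1" by (rule powr_mono') (use g d1 in auto)
        then have "1 / (c1 * c2) * \<bar>x - x0\<bar> powr (K1 + K2) \<le> 1 / (c1 * c2) * \<bar>x - x0\<bar>"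
          using c by (intro mult_left_mono) auto
        finally show ?thesis .
      qed
      then show ?thesis using c by (intro exI[of _ "1 / (c1 * c2)"]) auto
    next
      case False
      then have H4: "H4 x0 a b K1 K2" using nH unfolding H2_def H3_def by auto
      then have s: "strong_deg x0 a K1" "strong_deg x0 b K2" unfolding H4_def by auto
      obtain Ma where Ma: "\<forall>x\<in>{0..1}. a x \<le> Ma * \<bar>x - x0\<bar>" using strong_upper[OF s(1) a0(1)] x0 by auto
      obtain Mb where Mb: "\<forall>x\<in>{0..1}. b x \<le> Mb * \<bar>x - x0\<bar>" using strong_upper[OF s(2) a0(2)] x0 by auto
      have "a x * b x \<le> (\<bar>Ma * Mb\<bar> + 1) * \<bar>x - x0\<bar>" if x: "x \<in> {0..1}" for x
      proof -
        have d1: "\<bar>x - x0\<bar> \<le> 1" using x x0 by auto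
        have "a x * b x \<le> (Ma * \<bar>x - x0\<bar>) * (Mb * \<bar>x - x0\<bar>)"
          using Ma Mb ann[OF x] x by (intro mult_mono) (auto intro: order_trans)
        also have "\<dots> = (Ma * Mb) * (\<bar>x - x0\<bar> * \<bar>x - x0\<bar>)" by (simp add: algebra_simps)
        also have "\<dots> \<le> \<bar>Ma * Mb\<bar> * (\<bar>x - x0\<bar> * \<bar>x - x0\<bar>)" by (intro mult_right_mono) auto
        also have "\<dots> \<le> \<bar>Ma * Mb\<bar> * \<bar>x - x0\<bar>"
        proof (intro mult_left_mono)
          show "\<bar>x - x0\<bar> * \<bar>x - x0\<bar> \<le> \<bar>x - x0\<bar>"
            using mult_left_mono[OF d1, of "\<bar>x - x0\<bar>"] by simp
        qed simp
        also have "\<dots> \<le> (\<bar>Ma * Mb\<bar> + 1) * \<bar>x - x0\<bar>" by (simp add: algebra_simps)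
        finally show ?thesis .
      qed
      then show ?thesis by (intro exI[of _ "\<bar>Ma * Mb\<bar> + 1"]) auto
    qed
    then obtain C where C: "C > 0" "\<And>x. x \<in> {0..1} \<Longrightarrow> a x * b x \<le> C * \<bar>x - x0\<bar>" by blast
    obtain gb where "W11_deriv b gb" using deg_props[OF db] by blast
    then have bc: "continuous_on {0..1} b" by (rule W11_cont)
    have "bounded (b ` {0..1})" by (intro compact_imp_bounded compact_continuous_image bc) auto
    then obtain Mb0 where Mb0: "\<forall>y\<in>b ` {0..1}. norm y \<le> Mb0" unfolding bounded_iff by blast
    define Mb where "Mb = max Mb0 0"
    have Mb: "0 \<le> Mb" "\<And>x. x \<in> {0..1} \<Longrightarrow> b x \<le> Mb" using Mb0 unfolding Mb_def by force+
    obtain C0 M where CM: "C0 \<ge> 0" "M \<ge> 1" and k: "\<forall>u u'. Kab_mem a b u u' \<longrightarrow>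
     I01 (\<lambda>x. (u x)\<^sup>2 / (a x * b x)) \<le> C0 * I01 (\<lambda>x. (u' x)\<^sup>2) \<and>
     I01 (\<lambda>x. (u x)\<^sup>2 / a x) + I01 (\<lambda>x. (u' x)\<^sup>2) + I01 (\<lambda>x. (u x)\<^sup>2 / (a x * b x))
       \<le> M * I01 (\<lambda>x. (u' x)\<^sup>2)"
      using key_nH1[OF x0 a0 pos ca cb g(1) C Mb] by blast
    show ?thesis using CM k False unfolding K_mem_def K_normsq_def by auto
  qed
qed



theorem proposition3p5:
  fixes x0 K1 K2 lam :: real and a b :: "real \<Rightarrow> real"
  assumes "0 < x0" "x0 < 1"
    and "basic_ab x0 a b"
    and "condH x0 a b K1 K2"
    and "lam \<noteq> 0"
    and "lam < 1 / C_star x0 a b K1 K2"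
  shows "\<exists>\<Lambda>>0. \<forall>u u'. K_mem x0 a b K1 K2 u u' \<longrightarrow>
           I01 (\<lambda>x. (u' x)\<^sup>2) - lam * I01 (\<lambda>x. (u x)\<^sup>2 / (a x * b x))
             \<ge> \<Lambda> * K_normsq x0 a b K1 K2 u u'"
proof -
  obtain C0 M where CM: "C0 \<ge> 0" "M \<ge> 1" and key: "\<And>u u'. K_mem x0 a b K1 K2 u u' \<Longrightarrow>
     I01 (\<lambda>x. (u x)\<^sup>2 / (a x * b x)) \<le> C0 * I01 (\<lambda>x. (u' x)\<^sup>2) \<and>
     K_normsq x0 a b K1 K2 u u' \<le> M * I01 (\<lambda>x. (u' x)\<^sup>2)"
    using key_all[OF assms(1-4)] by blast
  have pos: "\<And>x. x \<in> {0..1} \<Longrightarrow> x \<noteq> x0 \<Longrightarrow> 0 < a x \<and> 0 < b x" and a0: "a x0 = 0"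
    using assms(3) unfolding basic_ab_def by auto
  have A0: "0 \<le> I01 (\<lambda>x. (u x)\<^sup>2 / (a x * b x))" for u
  proof (rule I01_nonneg)
    fix x :: real assume x: "x \<in> {0..1}"
    show "0 \<le> (u x)\<^sup>2 / (a x * b x)"
    proof (cases "x = x0")
      case True then show ?thesis using a0 by simp
    next
      case False then have "0 < a x" "0 < b x" using pos[OF x] by auto
      then show ?thesis by simp
    qed
  qed
  have B0: "0 \<le> I01 (\<lambda>x. (u' x)\<^sup>2)" for u' by (rule I01_nonneg) simp
  define S where "S = {C. \<forall>u u'. K_mem x0 a b K1 K2 u u' \<longrightarrow>
      I01 (\<lambda>x. (u x)\<^sup>2 / (a x * b x)) \<le> C * I01 (\<lambda>x. (u' x)\<^sup>2)}"
  have Cs: "C_star x0 a b K1 K2 = Inf S" unfolding C_star_def S_def ..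
  have C0S: "C0 \<in> S" unfolding S_def using key by blast
  show ?thesis
  proof (cases "\<exists>u u'. K_mem x0 a b K1 K2 u u' \<and> 0 < I01 (\<lambda>x. (u' x)\<^sup>2)")
    case True
    then obtain u1 u1' where u1: "K_mem x0 a b K1 K2 u1 u1'" "0 < I01 (\<lambda>x. (u1' x)\<^sup>2)" by blast
    have lb: "0 \<le> C" if "C \<in> S" for C
    proof -
      have "I01 (\<lambda>x. (u1 x)\<^sup>2 / (a x * b x)) \<le> C * I01 (\<lambda>x. (u1' x)\<^sup>2)" using that u1 unfolding S_def by blast
      then have "0 \<le> C * I01 (\<lambda>x. (u1' x)\<^sup>2)" using A0[of u1] by linarith
      then show ?thesis using u1(2) by (simp add: zero_le_mult_iff)
    qed
    define Cs where "Cs = C_star x0 a b K1 K2"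
    have Sne: "S \<noteq> {}" using C0S by blast
    have Cs0: "0 \<le> Cs" unfolding Cs_def Cs by (rule cInf_greatest[OF Sne lb])
    have CsI: "I01 (\<lambda>x. (u x)\<^sup>2 / (a x * b x)) \<le> Cs * I01 (\<lambda>x. (u' x)\<^sup>2)"
      if u: "K_mem x0 a b K1 K2 u u'" for u u'
    proof (cases "0 < I01 (\<lambda>x. (u' x)\<^sup>2)")
      case True
      have "I01 (\<lambda>x. (u x)\<^sup>2 / (a x * b x)) / I01 (\<lambda>x. (u' x)\<^sup>2) \<le> Cs" unfolding Cs_def Cs
      proof (rule cInf_greatest[OF Sne])
        fix C assume "C \<in> S"
        then have "I01 (\<lambda>x. (u x)\<^sup>2 / (a x * b x)) \<le> C * I01 (\<lambda>x. (u' x)\<^sup>2)" using u unfolding S_def by blast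
        then show "I01 (\<lambda>x. (u x)\<^sup>2 / (a x * b x)) / I01 (\<lambda>x. (u' x)\<^sup>2) \<le> C"
          using True by (simp add: pos_divide_le_eq)
      qed
      then show ?thesis using True by (simp add: pos_divide_le_eq)
    next
      case False
      then have "I01 (\<lambda>x. (u' x)\<^sup>2) = 0" using B0[of u'] by linarith
      then show ?thesis using key[OF u] by simp
    qed
    show ?thesis
    proof (cases "lam < 0")
      case True
      show ?thesis
      proof (intro exI[of _ "1 / M"] conjI allI impI)
        show "0 < 1 / M" using CM by simp
        fix u u' assume u: "K_mem x0 a b K1 K2 u u'"
        have "1 / M * K_normsq x0 a b K1 K2 u u' \<le> 1 / M * (M * I01 (\<lambda>x. (u' x)\<^sup>2))"
          using key[OF u] CM by (intro mult_left_mono) auto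
        also have "\<dots> = I01 (\<lambda>x. (u' x)\<^sup>2)" using CM by simp
        also have "\<dots> \<le> I01 (\<lambda>x. (u' x)\<^sup>2) - lam * I01 (\<lambda>x. (u x)\<^sup>2 / (a x * b x))"
          using True A0[of u] by (simp add: mult_nonpos_nonneg)
        finally show "1 / M * K_normsq x0 a b K1 K2 u u' \<le> I01 (\<lambda>x. (u' x)\<^sup>2) - lam * I01 (\<lambda>x. (u x)\<^sup>2 / (a x * b x))" .
      qed
    next
      case False
      then have lp: "0 < lam" using assms(5) by simp
      have lt: "lam < 1 / Cs" using assms(6) unfolding Cs_def .
      have Csp: "0 < Cs" using lt lp Cs0 by (cases "Cs = 0") auto
      have lc: "lam * Cs < 1" using lt Csp by (simp add: less_divide_eq)
      show ?thesis
      proof (intro exI[of _ "(1 - lam * Cs) / M"] conjI allI impI)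
        show "0 < (1 - lam * Cs) / M" using CM lc by simp
        fix u u' assume u: "K_mem x0 a b K1 K2 u u'"
        have "(1 - lam * Cs) / M * K_normsq x0 a b K1 K2 u u' \<le> (1 - lam * Cs) / M * (M * I01 (\<lambda>x. (u' x)\<^sup>2))"
          using key[OF u] CM lc by (intro mult_left_mono) auto
        also have "\<dots> = (1 - lam * Cs) * I01 (\<lambda>x. (u' x)\<^sup>2)" using CM by simp
        also have "\<dots> = I01 (\<lambda>x. (u' x)\<^sup>2) - lam * (Cs * I01 (\<lambda>x. (u' x)\<^sup>2))" by (simp add: algebra_simps)
        also have "\<dots> \<le> I01 (\<lambda>x. (u' x)\<^sup>2) - lam * I01 (\<lambda>x. (u x)\<^sup>2 / (a x * b x))"
          using CsI[OF u] lp by (simp add: mult_left_mono)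
        finally show "(1 - lam * Cs) / M * K_normsq x0 a b K1 K2 u u' \<le> I01 (\<lambda>x. (u' x)\<^sup>2) - lam * I01 (\<lambda>x. (u x)\<^sup>2 / (a x * b x))" .
      qed
    qed
  next
    case False
    show ?thesis
    proof (intro exI[of _ 1] conjI allI impI)
      show "(0::real) < 1" by simp
      fix u u' assume u: "K_mem x0 a b K1 K2 u u'"
      have B: "I01 (\<lambda>x. (u' x)\<^sup>2) = 0" using False u B0[of u'] by force
      then have A: "I01 (\<lambda>x. (u x)\<^sup>2 / (a x * b x)) = 0" using key[OF u] A0[of u] by simp
      have "K_normsq x0 a b K1 K2 u u' \<le> 0" using key[OF u] B by simp
      then show "1 * K_normsq x0 a b K1 K2 u u' \<le> I01 (\<lambda>x. (u' x)\<^sup>2) - lam * I01 (\<lambda>x. (u x)\<^sup>2 / (a x * b x))"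
        using A B by simp
    qed
  qed
qed


end
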